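(* Define $\widetilde\Pi_h:L^2(I)\to\mathcal S^{2,0}_0(\mathcal T_h)$ by $$\widetilde\Pi_h v=\sum_{z\in\mathcal N_2(\mathcal T_h)\setminus\{a,b\}}\frac{(v,\varphi_{z})}{\beta_{z}}\varphi_{z},\qquad \beta_z=\int_I\varphi_z\,dx,$$ where $\{\varphi_z\}_{z\in\mathcal N_2(\mathcal T_h)}$ is the nodal (Lagrange) basis of $\mathcal S^{2,0}(\mathcal T_h)$, $\varphi_z(y)=\delta_{zy}$ for $y\in\mathcal N_2(\mathcal T_h)$. (It satisfies $(\widetilde\Pi_hv,w_h)_{h,2}=(v,w_h)$ for all $w_h\in\mathcal S^{2,0}_0(\mathcal T_h)$, $v\in L^2(I)$.) Then there is $c>0$ independent of $h$ such that $$\|\widetilde\Pi_hv\|_{H^1(I)}\le c\|v\|_{H^1(I)}\quad\text{for all }v\in H^1_0(I).$$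
   Context: Mesh notation: $I=(a,b)\subset\mathbb R$, $a=x_0<x_1<\dots<x_M=b$, $I_i=[x_{i-1},x_i]$, $h_i=x_i-x_{i-1}$, $h=\max_i h_i$, $\mathcal T_h=\{I_1,\dots,I_M\}$. The meshes are quasi-uniform: there is $c>0$ independent of $h$ with $h\le c\,h_i$ for all $i$. Let $m_i=(x_{i-1}+x_i)/2$, $\mathcal N_1(\mathcal T_h)=\{x_0,\dots,x_M\}$, $\mathcal N_2(\mathcal T_h)=\mathcal N_1(\mathcal T_h)\cup\{m_1,\dots,m_M\}$. For $k\ge1$, $l\in\{0,1\}$, $\mathcal S^{k,l}(\mathcal T_h)=\{v\in C^l(\bar I): v|_{I_i}\in\mathcal P_k\ \forall i\}$; $\mathcal S^{2,0}_0(\mathcal T_h)=\{\mu\in\mathcal S^{2,0}(\mathcal T_h):\mu(a)=\mu(b)=0\}$. $\mathcal I_{h,2}$ is the nodal interpolant into $\mathcal S^{2,0}(\mathcal T_h)$ at $\mathcal N_2(\mathcal T_h)$. $(\cdot,\cdot)$ is the $L^2(I)$ inner product, $(u,v)_{h,2}=\int_I\mathcal I_{h,2}(uv)\,dx$, and $H^1_0(I)=\{v\in H^1(I):v(a)=v(b)=0\}$. *)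

theory Defs
  imports "HOL-Analysis.Analysis" "HOL-Computational_Algebra.Polynomial"
begin

definition is_mesh :: "real \<Rightarrow> real \<Rightarrow> nat \<Rightarrow> (nat \<Rightarrow> real) \<Rightarrow> bool" where
  "is_mesh a b M x \<longleftrightarrow> M \<ge> 1 \<and> x 0 = a \<and> x M = b \<and> (\<forall>i\<in>{1..M}. x (i - 1) < x i)"

definition meshsize :: "nat \<Rightarrow> (nat \<Rightarrow> real) \<Rightarrow> real" where
  "meshsize M x = Max ((\<lambda>i. x i - x (i - 1)) ` {1..M})"

definition quasi_uniform :: "real \<Rightarrow> nat \<Rightarrow> (nat \<Rightarrow> real) \<Rightarrow> bool" where
  "quasi_uniform C M x \<longleftrightarrow> (\<forall>i\<in>{1..M}. meshsize M x \<le> C * (x i - x (i - 1)))"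

definition nodes2 :: "nat \<Rightarrow> (nat \<Rightarrow> real) \<Rightarrow> real set" where
  "nodes2 M x = x ` {0..M} \<union> (\<lambda>i. (x (i - 1) + x i) / 2) ` {1..M}"

(* S^{2,0}(T_h): continuous piecewise quadratics on [a,b]; as functions real \<Rightarrow> real
   they are extended by zero outside [a,b] (convention; only values on [a,b] matter). *)
definition S20 :: "real \<Rightarrow> real \<Rightarrow> nat \<Rightarrow> (nat \<Rightarrow> real) \<Rightarrow> (real \<Rightarrow> real) set" where
  "S20 a b M x = {f. continuous_on {a..b} f \<and> (\<forall>t. t \<notin> {a..b} \<longrightarrow> f t = 0) \<and>
      (\<forall>i\<in>{1..M}. \<exists>p :: real poly. degree p \<le> 2 \<and> (\<forall>t\<in>{x (i - 1)..x i}. f t = poly p t))}"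

definition nodal_basis :: "real \<Rightarrow> real \<Rightarrow> nat \<Rightarrow> (nat \<Rightarrow> real) \<Rightarrow> real \<Rightarrow> (real \<Rightarrow> real)" where
  "nodal_basis a b M x z = (THE f. f \<in> S20 a b M x \<and>
      (\<forall>y\<in>nodes2 M x. f y = (if y = z then 1 else 0)))"

definition beta_node :: "real \<Rightarrow> real \<Rightarrow> nat \<Rightarrow> (nat \<Rightarrow> real) \<Rightarrow> real \<Rightarrow> real" where
  "beta_node a b M x z = set_lebesgue_integral lborel {a..b} (nodal_basis a b M x z)"

definition Pi_tilde :: "real \<Rightarrow> real \<Rightarrow> nat \<Rightarrow> (nat \<Rightarrow> real) \<Rightarrow> (real \<Rightarrow> real) \<Rightarrow> (real \<Rightarrow> real)" where
  "Pi_tilde a b M x v = (\<lambda>t. \<Sum>z\<in>nodes2 M x - {a, b}.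
      (set_lebesgue_integral lborel {a..b} (\<lambda>y. v y * nodal_basis a b M x z y) / beta_node a b M x z)
        * nodal_basis a b M x z t)"

(* g is a weak derivative of v on (a,b) in L^2: v(s) = v(a) + \<integral>_a^s g  (1D characterisation of H^1) *)
definition weak_deriv :: "real \<Rightarrow> real \<Rightarrow> (real \<Rightarrow> real) \<Rightarrow> (real \<Rightarrow> real) \<Rightarrow> bool" where
  "weak_deriv a b v g \<longleftrightarrow> g \<in> borel_measurable lborel \<and>
      set_integrable lborel {a..b} g \<and> set_integrable lborel {a..b} (\<lambda>t. (g t)\<^sup>2) \<and>
      (\<forall>s\<in>{a..b}. v s = v a + set_lebesgue_integral lborel {a..s} g)"

definition H1 :: "real \<Rightarrow> real \<Rightarrow> (real \<Rightarrow> real) \<Rightarrow> bool" where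
  "H1 a b v \<longleftrightarrow> (\<exists>g. weak_deriv a b v g)"

definition H10 :: "real \<Rightarrow> real \<Rightarrow> (real \<Rightarrow> real) \<Rightarrow> bool" where
  "H10 a b v \<longleftrightarrow> H1 a b v \<and> v a = 0 \<and> v b = 0"

definition H1_norm :: "real \<Rightarrow> real \<Rightarrow> (real \<Rightarrow> real) \<Rightarrow> real" where
  "H1_norm a b v = sqrt (set_lebesgue_integral lborel {a..b} (\<lambda>t. (v t)\<^sup>2)
      + set_lebesgue_integral lborel {a..b} (\<lambda>t. ((SOME g. weak_deriv a b v g) t)\<^sup>2))"

end

theory Submission
  imports Defs
begin

definition lag :: "real \<Rightarrow> real \<Rightarrow> real \<Rightarrow> real \<Rightarrow> real \<Rightarrow> real \<Rightarrow> real" where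
  "lag l r y0 ym y1 t = (let s = (t - l) / (r - l) in
     y0 * ((1 - s) * (1 - 2 * s)) + ym * (4 * s * (1 - s)) + y1 * (s * (2 * s - 1)))"

definition lagd :: "real \<Rightarrow> real \<Rightarrow> real \<Rightarrow> real \<Rightarrow> real \<Rightarrow> real \<Rightarrow> real" where
  "lagd l r y0 ym y1 t = (let s = (t - l) / (r - l) in
     (y0 * (4 * s - 3) + ym * (4 - 8 * s) + y1 * (4 * s - 1)) / (r - l))"

definition lagI :: "real \<Rightarrow> real \<Rightarrow> real \<Rightarrow> real \<Rightarrow> real \<Rightarrow> real \<Rightarrow> real" where
  "lagI l r y0 ym y1 t = (let s = (t - l) / (r - l) in
     (r - l) * (y0 * (s - 3 * s^2 / 2 + 2 * s^3 / 3) + ym * (2 * s^2 - 4 * s^3 / 3) + y1 * (2 * s^3 / 3 - s^2 / 2)))"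

lemma ds_deriv: "((\<lambda>t. (t - l) / (r - l)) has_real_derivative 1 / (r - l)) (at t)"
  by (rule DERIV_cdivide) (rule derivative_eq_intros refl | simp)+

lemma lag_deriv:
  shows "((lag l r y0 ym y1) has_real_derivative lagd l r y0 ym y1 t) (at t)"
proof -
  define P where "P s = y0 * ((1 - s) * (1 - 2 * s)) + ym * (4 * s * (1 - s)) + y1 * (s * (2 * s - 1))" for s :: real
  define P' where "P' s = y0 * (4 * s - 3) + ym * (4 - 8 * s) + y1 * (4 * s - 1)" for s :: real
  have dP: "(P has_real_derivative P' s) (at s)" for s
    unfolding P_def P'_def
    by (rule derivative_eq_intros refl | simp)+
  have "((\<lambda>t. P ((t - l) / (r - l))) has_real_derivative P' ((t - l) / (r - l)) * (1 / (r - l))) (at t)"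
    using DERIV_chain2[OF dP ds_deriv] by simp
  moreover have "(\<lambda>t. P ((t - l) / (r - l))) = lag l r y0 ym y1"
    by (auto simp: P_def lag_def Let_def)
  moreover have "P' ((t - l) / (r - l)) * (1 / (r - l)) = lagd l r y0 ym y1 t"
    by (simp add: P'_def lagd_def Let_def)
  ultimately show ?thesis by simp
qed

lemma lagI_deriv:
  assumes "l < r"
  shows "((lagI l r y0 ym y1) has_real_derivative lag l r y0 ym y1 t) (at t)"
proof -
  define P where "P s = (r - l) * (y0 * (s - 3 * s^2 / 2 + 2 * s^3 / 3) + ym * (2 * s^2 - 4 * s^3 / 3) + y1 * (2 * s^3 / 3 - s^2 / 2))" for s :: real
  define P' where "P' s = (r - l) * (y0 * ((1 - s) * (1 - 2 * s)) + ym * (4 * s * (1 - s)) + y1 * (s * (2 * s - 1)))" for s :: real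
  have dP: "(P has_real_derivative P' s) (at s)" for s
    unfolding P_def P'_def
    by (rule derivative_eq_intros refl | simp)+ (simp add: algebra_simps power2_eq_square)
  have "((\<lambda>t. P ((t - l) / (r - l))) has_real_derivative P' ((t - l) / (r - l)) * (1 / (r - l))) (at t)"
    using DERIV_chain2[OF dP ds_deriv] by simp
  moreover have "(\<lambda>t. P ((t - l) / (r - l))) = lagI l r y0 ym y1"
    by (auto simp: P_def lagI_def Let_def)
  moreover have "P' ((t - l) / (r - l)) * (1 / (r - l)) = lag l r y0 ym y1 t"
    using assms by (simp add: P'_def lag_def Let_def)
  ultimately show ?thesis by simp
qed

lemma lag_simpson:
  assumes "l < r"
  shows "((lag l r y0 ym y1) has_integral ((r - l) * (y0 + 4 * ym + y1) / 6)) {l..r}"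
proof -
  have "((lag l r y0 ym y1) has_integral (lagI l r y0 ym y1 r - lagI l r y0 ym y1 l)) {l..r}"
    apply (rule fundamental_theorem_of_calculus)
    using assms apply simp
    using lagI_deriv[OF assms] by (simp add: has_real_derivative_iff_has_vector_derivative has_vector_derivative_at_within)
  moreover have "lagI l r y0 ym y1 r - lagI l r y0 ym y1 l = (r - l) * (y0 + 4 * ym + y1) / 6"
    using assms by (simp add: lagI_def Let_def field_simps)
  ultimately show ?thesis by simp
qed

lemma lag_l: "l < r \<Longrightarrow> lag l r y0 ym y1 l = y0"
  by (simp add: lag_def)
lemma lag_r: "l < r \<Longrightarrow> lag l r y0 ym y1 r = y1"
  by (simp add: lag_def)
lemma lag_m: "l < r \<Longrightarrow> lag l r y0 ym y1 ((l + r) / 2) = ym"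
proof -
  assume "l < r"
  then have e: "((l + r) / 2 - l) / (r - l) = 1/2" by (simp add: field_simps)
  show ?thesis unfolding lag_def Let_def e by simp
qed

lemma lag_cont: "l < r \<Longrightarrow> continuous_on S (lag l r y0 ym y1)"
  unfolding lag_def[abs_def] Let_def by (intro continuous_intros) auto

lemma basis_bounds: fixes s :: real assumes "0 \<le> s" "s \<le> 1"
  shows "\<bar>(1 - s) * (1 - 2 * s)\<bar> \<le> 1 \<and> \<bar>4 * s * (1 - s)\<bar> \<le> 1 \<and> \<bar>s * (2 * s - 1)\<bar> \<le> 1"
proof -
  have a: "s * s \<le> s" using assms by (simp add: mult_le_one mult_left_le)
  have b: "0 \<le> s * s" by simp
  have d: "0 \<le> (2 * s - 1) * (2 * s - 1)" by simp
  have d': "(2 * s - 1) * (2 * s - 1) = 4 * (s * s) - 4 * s + 1" by (simp add: algebra_simps)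
  have e1: "(1 - s) * (1 - 2 * s) = 1 - 3 * s + 2 * (s * s)" by (simp add: algebra_simps)
  have e2: "4 * s * (1 - s) = 4 * s - 4 * (s * s)" by (simp add: algebra_simps)
  have e3: "s * (2 * s - 1) = 2 * (s * s) - s" by (simp add: algebra_simps)
  show ?thesis unfolding e1 e2 e3 abs_le_iff using a b d d' assms by linarith
qed

lemma lag_bound:
  assumes "l < r" "t \<in> {l..r}"
  shows "\<bar>lag l r y0 ym y1 t\<bar> \<le> \<bar>y0\<bar> + \<bar>ym\<bar> + \<bar>y1\<bar>"
proof -
  define s where "s = (t - l) / (r - l)"
  have s: "0 \<le> s" "s \<le> 1" using assms by (auto simp: s_def field_simps)
  note bb = basis_bounds[OF s]
  have "\<bar>lag l r y0 ym y1 t\<bar> \<le> \<bar>y0 * ((1 - s) * (1 - 2 * s))\<bar> + \<bar>ym * (4 * s * (1 - s))\<bar> + \<bar>y1 * (s * (2 * s - 1))\<bar>"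
    by (simp add: lag_def s_def[symmetric] Let_def)
  also have "\<dots> \<le> \<bar>y0\<bar> + \<bar>ym\<bar> + \<bar>y1\<bar>"
    using bb unfolding abs_mult by (intro add_mono; simp add: mult_left_le)
  finally show ?thesis .
qed

lemma lagd_shift: "lagd l r y0 ym y1 t = lagd l r (y0 - w) (ym - w) (y1 - w) t"
  by (simp add: lagd_def Let_def algebra_simps)

lemma lagd_bound:
  assumes "l < r" "t \<in> {l..r}"
  shows "\<bar>lagd l r y0 ym y1 t\<bar> \<le> (3 * \<bar>y0\<bar> + 4 * \<bar>ym\<bar> + 3 * \<bar>y1\<bar>) / (r - l)"
proof -
  define s where "s = (t - l) / (r - l)"
  have s: "0 \<le> s" "s \<le> 1" using assms by (auto simp: s_def field_simps)
  have "\<bar>y0 * (4 * s - 3) + ym * (4 - 8 * s) + y1 * (4 * s - 1)\<bar> \<le> 3 * \<bar>y0\<bar> + 4 * \<bar>ym\<bar> + 3 * \<bar>y1\<bar>"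
  proof -
    have "\<bar>y0 * (4 * s - 3)\<bar> \<le> \<bar>y0\<bar> * 3" unfolding abs_mult using s by (intro mult_left_mono) auto
    moreover have "\<bar>ym * (4 - 8 * s)\<bar> \<le> \<bar>ym\<bar> * 4" unfolding abs_mult using s by (intro mult_left_mono) auto
    moreover have "\<bar>y1 * (4 * s - 1)\<bar> \<le> \<bar>y1\<bar> * 3" unfolding abs_mult using s by (intro mult_left_mono) auto
    ultimately show ?thesis by linarith
  qed
  moreover have "lagd l r y0 ym y1 t = (y0 * (4 * s - 3) + ym * (4 - 8 * s) + y1 * (4 * s - 1)) / (r - l)"
    by (simp add: lagd_def s_def Let_def)
  ultimately show ?thesis using assms
    by (simp add: abs_div divide_right_mono)
qed

lemma lag_poly: "\<exists>p :: real poly. degree p \<le> 2 \<and> (\<forall>t. lag l r y0 ym y1 t = poly p t)"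
proof -
  define k where "k = 1 / (r - l)"
  have t3: "y0 * ((1 - (t - l) * k) * (1 - 2 * ((t - l) * k))) + ym * (4 * ((t - l) * k) * (1 - (t - l) * k)) + y1 * ((t - l) * k * (2 * ((t - l) * k) - 1))
   = poly [: y0 - (- 3 * y0 + 4 * ym - y1) * k * l + (2 * y0 - 4 * ym + 2 * y1) * k^2 * l^2, (- 3 * y0 + 4 * ym - y1) * k - 2 * (2 * y0 - 4 * ym + 2 * y1) * k^2 * l, (2 * y0 - 4 * ym + 2 * y1) * k^2 :] t" for t
    by simp algebra
  have "lag l r y0 ym y1 t = y0 * ((1 - (t - l) * k) * (1 - 2 * ((t - l) * k))) + ym * (4 * ((t - l) * k) * (1 - (t - l) * k)) + y1 * ((t - l) * k * (2 * ((t - l) * k) - 1))" for t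
    by (simp add: lag_def Let_def k_def)
  then show ?thesis using t3
    by (intro exI[of _ "[: y0 - (- 3 * y0 + 4 * ym - y1) * k * l + (2 * y0 - 4 * ym + 2 * y1) * k^2 * l^2, (- 3 * y0 + 4 * ym - y1) * k - 2 * (2 * y0 - 4 * ym + 2 * y1) * k^2 * l, (2 * y0 - 4 * ym + 2 * y1) * k^2 :]"]) 
       (auto simp: degree_pCons_le)
qed

lemma poly_lag:
  fixes p :: "real poly"
  assumes "degree p \<le> 2" "l < r"
  shows "poly p t = lag l r (poly p l) (poly p ((l + r) / 2)) (poly p r) t"
proof -
  have "poly p t = (\<Sum>i\<le>2. coeff p i * t ^ i)" for t
    unfolding poly_altdef using assms(1)
    by (intro sum.mono_neutral_left) (auto simp: coeff_eq_0)
  then have pe: "poly p t = coeff p 0 + coeff p 1 * t + coeff p 2 * t^2" for t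
    by (simp add: numeral_2_eq_2)
  define d where "d = (r - l) / 2"
  define s where "s = (t - l) / (r - l)"
  have tt: "t = l + s * (2 * d)" using assms(2) by (simp add: s_def d_def field_simps)
  have mm: "(l + r) / 2 = l + d" "r = l + 2 * d" by (simp_all add: d_def field_simps)
  have t2: "c0 + c1 * (l + s * (2 * d)) + c2 * (l + s * (2 * d))^2 = (c0 + c1 * l + c2 * l^2) * ((1 - s) * (1 - 2 * s))
     + (c0 + c1 * (l + d) + c2 * (l + d)^2) * (4 * s * (1 - s)) + (c0 + c1 * (l + 2 * d) + c2 * (l + 2 * d)^2) * (s * (2 * s - 1))"
    for c0 c1 c2 :: real by algebra
  have "lag l r (poly p l) (poly p ((l + r) / 2)) (poly p r) t =
     poly p l * ((1 - s) * (1 - 2 * s)) + poly p ((l + r) / 2) * (4 * s * (1 - s)) + poly p r * (s * (2 * s - 1))"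
    by (simp add: lag_def Let_def s_def)
  also have "\<dots> = poly p t"
  proof -
    have r1: "poly p r = poly p (l + 2 * d)" using mm(2) by simp
    have r2: "poly p t = poly p (l + s * (2 * d))" using tt by simp
    show ?thesis unfolding mm(1) r1 r2 unfolding pe by (rule t2[symmetric])
  qed
  finally show ?thesis by simp
qed

definition delta :: "real \<Rightarrow> real \<Rightarrow> real" where "delta z y = (if y = z then 1 else 0)"

lemma lag_decomp: "lag l r y0 ym y1 t = y0 * lag l r 1 0 0 t + ym * lag l r 0 1 0 t + y1 * lag l r 0 0 1 t"
  by (simp add: lag_def Let_def)

lemma lag_lin: "lag l r (\<Sum>z\<in>Z. c z * f z) (\<Sum>z\<in>Z. c z * g z) (\<Sum>z\<in>Z. c z * k z) t = (\<Sum>z\<in>Z. c z * lag l r (f z) (g z) (k z) t)"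
proof -
  have "(\<Sum>z\<in>Z. c z * lag l r (f z) (g z) (k z) t) = (\<Sum>z\<in>Z. lag l r 1 0 0 t * (c z * f z) + lag l r 0 1 0 t * (c z * g z) + lag l r 0 0 1 t * (c z * k z))"
    by (intro sum.cong refl, subst lag_decomp) (simp add: algebra_simps)
  also have "\<dots> = lag l r 1 0 0 t * (\<Sum>z\<in>Z. c z * f z) + lag l r 0 1 0 t * (\<Sum>z\<in>Z. c z * g z) + lag l r 0 0 1 t * (\<Sum>z\<in>Z. c z * k z)"
    by (simp add: sum.distrib sum_distrib_left)
  finally show ?thesis by (subst lag_decomp) simp
qed

locale msh =
  fixes a b :: real and M :: nat and x :: "nat \<Rightarrow> real" and C :: real
  assumes ab: "a < b" and mesh: "is_mesh a b M x" and qu: "quasi_uniform C M x"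
begin

lemma M1: "1 \<le> M" and x0: "x 0 = a" and xM: "x M = b" and step: "i \<in> {1..M} \<Longrightarrow> x (i - 1) < x i"
  using mesh by (auto simp: is_mesh_def)

lemma xstrict: "i < j \<Longrightarrow> j \<le> M \<Longrightarrow> x i < x j"
proof (induction j)
  case 0 then show ?case by simp
next
  case (Suc j)
  have s: "x j < x (Suc j)" using step[of "Suc j"] Suc.prems by auto
  show ?case
  proof (cases "i = j")
    case True then show ?thesis using s by simp
  next
    case False then have "i < j" using Suc.prems by simp
    then show ?thesis using Suc.IH Suc.prems s by simp
  qed
qed

lemma xmono: "i \<le> j \<Longrightarrow> j \<le> M \<Longrightarrow> x i \<le> x j"
  using xstrict[of i j] by (cases "i = j") auto

lemma x_in: "i \<le> M \<Longrightarrow> x i \<in> {a..b}"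
  using xmono[of 0 i] xmono[of i M] x0 xM by auto

definition "h = meshsize M x"

lemma hh_le: "i \<in> {1..M} \<Longrightarrow> x i - x (i - 1) \<le> h"
  unfolding h_def meshsize_def by (rule Max_ge) auto

lemma hh_pos: "i \<in> {1..M} \<Longrightarrow> 0 < x i - x (i - 1)"
  using step by auto

lemma h_pos: "0 < h"
  using hh_le[of 1] hh_pos[of 1] M1 by auto

lemma h_le_C: "i \<in> {1..M} \<Longrightarrow> h \<le> C * (x i - x (i - 1))"
  using qu unfolding quasi_uniform_def h_def by auto

lemma C_pos: "0 < C"
proof -
  have "h \<le> C * (x 1 - x 0)" using h_le_C[of 1] M1 by auto
  moreover have "0 < x 1 - x 0" using hh_pos[of 1] M1 by auto
  ultimately have "0 < C * (x 1 - x 0)" using h_pos by linarith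
  then show ?thesis using \<open>0 < x 1 - x 0\<close> by (simp add: zero_less_mult_iff)
qed

definition mid :: "nat \<Rightarrow> real" where "mid i = (x (i - 1) + x i) / 2"

definition elt :: "real \<Rightarrow> nat" where "elt t = (LEAST i. 1 \<le> i \<and> t \<le> x i)"

lemma elt_prop:
  assumes "t \<in> {a..b}"
  shows "elt t \<in> {1..M}" "t \<in> {x (elt t - 1)..x (elt t)}"
proof -
  have PM: "1 \<le> M \<and> t \<le> x M" using assms M1 xM by auto
  have P: "1 \<le> elt t \<and> t \<le> x (elt t)" unfolding elt_def by (rule LeastI[of _ M]) (rule PM)
  have le: "elt t \<le> M" unfolding elt_def by (rule Least_le) (rule PM)
  show "elt t \<in> {1..M}" using P le by auto
  show "t \<in> {x (elt t - 1)..x (elt t)}"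
  proof (cases "elt t = 1")
    case True then show ?thesis using P assms x0 by auto
  next
    case False
    then have "elt t - 1 < elt t" "1 \<le> elt t - 1" using P by auto
    then have "\<not> (1 \<le> elt t - 1 \<and> t \<le> x (elt t - 1))"
      using not_less_Least[of "elt t - 1" "\<lambda>i. 1 \<le> i \<and> t \<le> x i"] unfolding elt_def by blast
    then show ?thesis using P \<open>1 \<le> elt t - 1\<close> by auto
  qed
qed

lemma elt_le: "i \<in> {1..M} \<Longrightarrow> t \<le> x i \<Longrightarrow> elt t \<le> i"
  unfolding elt_def by (rule Least_le) auto

definition LI :: "nat \<Rightarrow> (real \<Rightarrow> real) \<Rightarrow> real \<Rightarrow> real" where
  "LI i d t = lag (x (i - 1)) (x i) (d (x (i - 1))) (d (mid i)) (d (x i)) t"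

definition Q :: "(real \<Rightarrow> real) \<Rightarrow> real \<Rightarrow> real" where
  "Q d t = (if t \<in> {a..b} then LI (elt t) d t else 0)"

lemma I_sub: "i \<in> {1..M} \<Longrightarrow> {x (i - 1)..x i} \<subseteq> {a..b}"
  using x_in[of i] x_in[of "i - 1"] by auto

lemma Q_elem:
  assumes i: "i \<in> {1..M}" and t: "t \<in> {x (i - 1)..x i}"
  shows "Q d t = LI i d t"
proof -
  have tab: "t \<in> {a..b}" using I_sub[OF i] t by auto
  define j where "j = elt t"
  have j: "j \<in> {1..M}" "t \<in> {x (j - 1)..x j}" using elt_prop[OF tab] by (auto simp: j_def)
  have "j \<le> i" using elt_le[OF i] t by (auto simp: j_def)
  show ?thesis
  proof (cases "j = i")
    case True then show ?thesis using tab by (simp add: Q_def j_def)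
  next
    case False
    then have "j \<le> i - 1" using \<open>j \<le> i\<close> by auto
    then have "x j \<le> x (i - 1)" using i by (intro xmono) auto
    then have e1: "t = x j" "t = x (i - 1)" using t j by auto
    have ex: "x j = x (i - 1)" using e1 by simp
    have "Q d t = LI j d t" using tab by (simp add: Q_def j_def)
    also have "\<dots> = LI j d (x j)" using e1(1) by simp
    also have "\<dots> = d (x j)" unfolding LI_def using step[OF j(1)] by (simp add: lag_r)
    also have "\<dots> = d (x (i - 1))" using ex by simp
    also have "\<dots> = LI i d (x (i - 1))" unfolding LI_def using step[OF i] by (simp add: lag_l)
    also have "\<dots> = LI i d t" using e1(2) by simp
    finally show ?thesis .
  qed
qed

lemma cover: "{a..b} = (\<Union>i\<in>{1..M}. {x (i - 1)..x i})"
  using elt_prop I_sub by blast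

lemma finite_nodes: "finite (nodes2 M x)"
  by (simp add: nodes2_def)

lemma x_node: "i \<le> M \<Longrightarrow> x i \<in> nodes2 M x"
  by (auto simp: nodes2_def)

lemma mid_node: "i \<in> {1..M} \<Longrightarrow> mid i \<in> nodes2 M x"
  by (auto simp: nodes2_def mid_def)

lemma Q_cong: "(\<And>y. y \<in> nodes2 M x \<Longrightarrow> d y = d' y) \<Longrightarrow> Q d = Q d'"
proof
  fix t assume H: "\<And>y. y \<in> nodes2 M x \<Longrightarrow> d y = d' y"
  show "Q d t = Q d' t"
  proof (cases "t \<in> {a..b}")
    case True
    note e = elt_prop[OF True]
    then show ?thesis unfolding Q_def LI_def using H[OF x_node] H[OF mid_node] True by auto
  qed (auto simp: Q_def)
qed

lemma Q_S20: "Q d \<in> S20 a b M x"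
proof -
  have "continuous_on (\<Union>i\<in>{1..M}. {x (i - 1)..x i}) (Q d)"
  proof (rule continuous_on_closed_Union)
    fix i assume i: "i \<in> {1..M}"
    have "continuous_on {x (i - 1)..x i} (LI i d)"
      unfolding LI_def[abs_def] using lag_cont[OF step[OF i]] by simp
    then show "continuous_on {x (i - 1)..x i} (Q d)"
      by (rule continuous_on_eq) (simp add: Q_elem[OF i])
  qed auto
  then have c: "continuous_on {a..b} (Q d)" using cover by simp
  have p: "\<exists>p :: real poly. degree p \<le> 2 \<and> (\<forall>t\<in>{x (i - 1)..x i}. Q d t = poly p t)" if i: "i \<in> {1..M}" for i
  proof -
    obtain p :: "real poly" where "degree p \<le> 2" "\<forall>t. LI i d t = poly p t"
      using lag_poly unfolding LI_def by blast
    then show ?thesis using Q_elem[OF i] by auto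
  qed
  show ?thesis unfolding S20_def using c p by (auto simp: Q_def)
qed

lemma Q_nodes: "y \<in> nodes2 M x \<Longrightarrow> Q d y = d y"
proof -
  assume "y \<in> nodes2 M x"
  then consider j where "j \<le> M" "y = x j" | i where "i \<in> {1..M}" "y = mid i"
    unfolding nodes2_def mid_def by auto
  then show ?thesis
  proof cases
    case 1
    show ?thesis
    proof (cases "j = 0")
      case True
      have "Q d (x (1 - 1)) = LI 1 d (x (1 - 1))" using M1 step[of 1] by (intro Q_elem) auto
      then show ?thesis using 1 True step[of 1] M1 by (simp add: LI_def lag_l)
    next
      case False
      then have j: "j \<in> {1..M}" using 1 by auto
      have "Q d (x j) = LI j d (x j)" using j step[OF j] by (intro Q_elem) auto
      then show ?thesis using 1 step[OF j] by (simp add: LI_def lag_r)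
    qed
  next
    case 2
    have "Q d (mid i) = LI i d (mid i)" using 2 step[of i] by (intro Q_elem) (auto simp: mid_def)
    then have "Q d (mid i) = d (mid i)" using 2 step[of i] by (simp add: LI_def mid_def lag_m)
    then show ?thesis using 2 by simp
  qed
qed

lemma S20_Q: "f \<in> S20 a b M x \<Longrightarrow> f = Q f"
proof
  fix t assume f: "f \<in> S20 a b M x"
  show "f t = Q f t"
  proof (cases "t \<in> {a..b}")
    case False then show ?thesis using f by (auto simp: S20_def Q_def)
  next
    case True
    define i where "i = elt t"
    have i: "i \<in> {1..M}" "t \<in> {x (i - 1)..x i}" using elt_prop[OF True] by (auto simp: i_def)
    obtain p :: "real poly" where p: "degree p \<le> 2" "\<forall>s\<in>{x (i - 1)..x i}. f s = poly p s"
      using f i(1) unfolding S20_def by blast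
    have lt: "x (i - 1) < x i" using step[OF i(1)] .
    have "f t = poly p t" using p i by auto
    also have "\<dots> = lag (x (i - 1)) (x i) (poly p (x (i - 1))) (poly p (mid i)) (poly p (x i)) t"
      unfolding mid_def by (rule poly_lag[OF p(1) lt])
    also have "\<dots> = LI i f t" unfolding LI_def using p lt by (auto simp: mid_def)
    also have "\<dots> = Q f t" using Q_elem[OF i] by simp
    finally show ?thesis .
  qed
qed

lemma nodal_basis_eq: "nodal_basis a b M x z = Q (delta z)"
  unfolding nodal_basis_def
proof (rule the_equality)
  show "Q (delta z) \<in> S20 a b M x \<and> (\<forall>y\<in>nodes2 M x. Q (delta z) y = (if y = z then 1 else 0))"
    using Q_S20 Q_nodes by (auto simp: delta_def)
next
  fix f assume f: "f \<in> S20 a b M x \<and> (\<forall>y\<in>nodes2 M x. f y = (if y = z then 1 else 0))"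
  then have "f = Q f" using S20_Q by auto
  also have "\<dots> = Q (delta z)" using f by (intro Q_cong) (auto simp: delta_def)
  finally show "f = Q (delta z)" .
qed

lemma Q_lin: "Q (\<lambda>y. \<Sum>z\<in>Z. c z * dd z y) t = (\<Sum>z\<in>Z. c z * Q (dd z) t)"
proof (cases "t \<in> {a..b}")
  case True then show ?thesis unfolding Q_def LI_def by (simp add: lag_lin)
next
  case False
  then have "Q d t = 0" for d using False unfolding Q_def by auto
  then show ?thesis by simp
qed

definition cz :: "(real \<Rightarrow> real) \<Rightarrow> real \<Rightarrow> real" where
  "cz v z = set_lebesgue_integral lborel {a..b} (\<lambda>y. v y * nodal_basis a b M x z y) / beta_node a b M x z"

definition alpha :: "(real \<Rightarrow> real) \<Rightarrow> real \<Rightarrow> real" where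
  "alpha v y = (if y \<in> nodes2 M x - {a, b} then cz v y else 0)"

lemma Pi_eq: "Pi_tilde a b M x v = Q (alpha v)"
proof
  fix t
  have "Pi_tilde a b M x v t = (\<Sum>z\<in>nodes2 M x - {a, b}. cz v z * Q (delta z) t)"
    unfolding Pi_tilde_def cz_def nodal_basis_eq by simp
  also have "\<dots> = Q (\<lambda>y. \<Sum>z\<in>nodes2 M x - {a, b}. cz v z * delta z y) t"
    by (rule Q_lin[symmetric])
  also have "(\<lambda>y. \<Sum>z\<in>nodes2 M x - {a, b}. cz v z * delta z y) = alpha v"
  proof
    fix y
    have "(\<Sum>z\<in>nodes2 M x - {a, b}. cz v z * delta z y) = (\<Sum>z\<in>nodes2 M x - {a, b}. if y = z then cz v z else 0)"
      by (intro sum.cong) (auto simp: delta_def)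
    also have "\<dots> = alpha v y" using finite_nodes by (simp add: sum.delta alpha_def)
    finally show "(\<Sum>z\<in>nodes2 M x - {a, b}. cz v z * delta z y) = alpha v y" .
  qed
  finally show "Pi_tilde a b M x v t = Q (alpha v) t" .
qed

end

lemma alg1: fixes I L :: real shows "L \<noteq> 0 \<Longrightarrow> A - 2 * (I / L) * I + (I / L)^2 * L = A - I^2 / L"
  by (simp add: field_simps power2_eq_square)

lemma cs_integral:
  fixes f :: "real \<Rightarrow> real"
  assumes f: "f integrable_on {p..q}" and f2: "(\<lambda>t. (f t)^2) integrable_on {p..q}" and pq: "p \<le> q"
  shows "(integral {p..q} f)^2 \<le> (q - p) * integral {p..q} (\<lambda>t. (f t)^2)"
proof (cases "p = q")
  case True then show ?thesis by simp
next
  case False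
  then have L: "0 < q - p" using pq by simp
  define m where "m = integral {p..q} f / (q - p)"
  have i1: "(\<lambda>t. (f t)^2 - 2 * m * f t + m^2) integrable_on {p..q}"
    using f f2 by (intro integrable_diff integrable_add integrable_cmul integrable_const) (auto intro: integrable_on_mult_right)
  have eqf: "(\<lambda>t. (f t - m)^2) = (\<lambda>t. (f t)^2 - 2 * m * f t + m^2)"
    by (auto simp: power2_eq_square algebra_simps)
  have "0 \<le> integral {p..q} (\<lambda>t. (f t - m)^2)"
    by (rule integral_nonneg) (use i1 eqf in auto)
  also have "integral {p..q} (\<lambda>t. (f t - m)^2) = integral {p..q} (\<lambda>t. (f t)^2 - 2 * m * f t + m^2)"
    by (simp only: eqf)
  also have "\<dots> = integral {p..q} (\<lambda>t. (f t)^2) - 2 * m * integral {p..q} f + m^2 * (q - p)"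
  proof -
    have a1: "(\<lambda>t. 2 * m * f t) integrable_on {p..q}" using f by (rule integrable_on_mult_right)
    have a2: "(\<lambda>t. (f t)^2 - 2 * m * f t) integrable_on {p..q}" using f2 a1 by (rule integrable_diff)
    have "integral {p..q} (\<lambda>t. (f t)^2 - 2 * m * f t + m^2) = integral {p..q} (\<lambda>t. (f t)^2 - 2 * m * f t) + integral {p..q} (\<lambda>t. m^2)"
      using a2 by (rule integral_add) (rule integrable_const_ivl)
    also have "integral {p..q} (\<lambda>t. (f t)^2 - 2 * m * f t) = integral {p..q} (\<lambda>t. (f t)^2) - integral {p..q} (\<lambda>t. 2 * m * f t)"
      using f2 a1 by (rule integral_diff)
    also have "integral {p..q} (\<lambda>t. 2 * m * f t) = 2 * m * integral {p..q} f" by simp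
    also have "integral {p..q} (\<lambda>t. m^2) = m^2 * (q - p)" using pq by simp
    finally show ?thesis .
  qed
  also have "\<dots> = integral {p..q} (\<lambda>t. (f t)^2) - (integral {p..q} f)^2 / (q - p)"
    using L unfolding m_def by (intro alg1) simp
  finally show ?thesis using L by (simp add: field_simps)
qed

lemma intY_lem:
  fixes d :: "real \<Rightarrow> real"
  assumes di: "set_integrable lborel {a..b} d"
    and z: "\<And>s. s \<in> {a..b} \<Longrightarrow> set_lebesgue_integral lborel {a..s} d = 0"
  defines "f \<equiv> \<lambda>t. indicator {a..b} t * d t"
  shows "(LINT t|lborel. indicator {y<..} t * f t) = 0"
  proof -
    have eqs: "(LINT t|lborel. indicator {y<..} t * f t) = set_lebesgue_integral lborel ({a..b} \<inter> {y<..}) d"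
      unfolding set_lebesgue_integral_def f_def by (intro Bochner_Integration.integral_cong) (auto simp: indicator_def)
    consider "y < a" | "b \<le> y" | "a \<le> y" "y < b" by linarith
    then show ?thesis
    proof cases
      case 1
      then have "{a..b} \<inter> {y<..} = {a..b}" by auto
      show ?thesis
      proof (cases "a \<le> b")
        case True then show ?thesis unfolding eqs \<open>{a..b} \<inter> {y<..} = {a..b}\<close> using z[of b] by simp
      next
        case False then have "{a..b} = {}" by simp
        then show ?thesis unfolding eqs \<open>{a..b} \<inter> {y<..} = {a..b}\<close> by (simp add: set_lebesgue_integral_def)
      qed
    next
      case 2
      then have e: "{a..b} \<inter> {y<..} = {}" by auto
      show ?thesis unfolding eqs e by (simp add: set_lebesgue_integral_def)
    next
      case 3
      have un: "{a..b} = {a..y} \<union> ({a..b} \<inter> {y<..})" using 3 by auto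
      have "set_lebesgue_integral lborel {a..b} d = set_lebesgue_integral lborel {a..y} d + set_lebesgue_integral lborel ({a..b} \<inter> {y<..}) d"
      proof -
        have s1: "set_integrable lborel {a..y} d" by (rule set_integrable_subset[OF di]) (use 3 in auto)
        have s2: "set_integrable lborel ({a..b} \<inter> {y<..}) d" by (rule set_integrable_subset[OF di]) auto
        have dj: "{a..y} \<inter> ({a..b} \<inter> {y<..}) = {}" by auto
        show ?thesis by (subst un) (rule set_integral_Un[OF dj s1 s2])
      qed
      then show ?thesis unfolding eqs using z[of b] z[of y] 3 by auto
    qed
  qed

lemma wd_zero:
  fixes d :: "real \<Rightarrow> real"
  assumes dm: "d \<in> borel_measurable lborel" and di: "set_integrable lborel {a..b} d"
    and z: "\<And>s. s \<in> {a..b} \<Longrightarrow> set_lebesgue_integral lborel {a..s} d = 0"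
  shows "AE t in lborel. t \<in> {a..b} \<longrightarrow> d t = 0"
proof -
  define f where "f t = indicator {a..b} t * d t" for t
  have fi: "integrable lborel f" using di unfolding set_integrable_def f_def by simp
  have fm[measurable]: "f \<in> borel_measurable lborel" using fi by auto
  define fp where "fp t = max 0 (f t)" for t
  define fn where "fn t = max 0 (- f t)" for t
  have fpi: "integrable lborel fp" unfolding fp_def using fi by (intro integrable_max) auto
  have fni: "integrable lborel fn" unfolding fn_def using fi by (intro integrable_max) auto
  have fpn: "f t = fp t - fn t" for t by (simp add: fp_def fn_def max_def)
  have ysets: "{y<..} \<in> sets lborel" for y :: real by simp
  have intY: "(LINT t|lborel. indicator {y<..} t * f t) = 0" for y :: real
    using intY_lem[OF di z] unfolding f_def by simp
  have fp_nn: "0 \<le> fp t" for t by (simp add: fp_def)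
  have fn_nn: "0 \<le> fn t" for t by (simp add: fn_def)
  have i1: "integrable lborel (\<lambda>t. indicator {y<..} t * fp t)" for y :: real
    using integrable_mult_indicator[OF _ fpi, of "{y<..}"] by simp
  have i2: "integrable lborel (\<lambda>t. indicator {y<..} t * fn t)" for y :: real
    using integrable_mult_indicator[OF _ fni, of "{y<..}"] by simp
  have nnp: "(\<integral>\<^sup>+ t. ennreal (fp t) * indicator {y<..} t \<partial>lborel) = ennreal (LINT t|lborel. indicator {y<..} t * fp t)" for y :: real
  proof -
    have "(\<integral>\<^sup>+ t. ennreal (fp t) * indicator {y<..} t \<partial>lborel) = (\<integral>\<^sup>+ t. ennreal (indicator {y<..} t * fp t) \<partial>lborel)"
      by (intro nn_integral_cong) (simp add: indicator_def)
    also have "\<dots> = ennreal (LINT t|lborel. indicator {y<..} t * fp t)"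
      by (rule nn_integral_eq_integral[OF i1]) (simp add: fp_nn)
    finally show ?thesis .
  qed
  have nnn: "(\<integral>\<^sup>+ t. ennreal (fn t) * indicator {y<..} t \<partial>lborel) = ennreal (LINT t|lborel. indicator {y<..} t * fn t)" for y :: real
  proof -
    have "(\<integral>\<^sup>+ t. ennreal (fn t) * indicator {y<..} t \<partial>lborel) = (\<integral>\<^sup>+ t. ennreal (indicator {y<..} t * fn t) \<partial>lborel)"
      by (intro nn_integral_cong) (simp add: indicator_def)
    also have "\<dots> = ennreal (LINT t|lborel. indicator {y<..} t * fn t)"
      by (rule nn_integral_eq_integral[OF i2]) (simp add: fn_nn)
    finally show ?thesis .
  qed
  have eqpn: "(LINT t|lborel. indicator {y<..} t * fp t) = (LINT t|lborel. indicator {y<..} t * fn t)" for y :: real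
  proof -
    have "(LINT t|lborel. indicator {y<..} t * fp t) - (LINT t|lborel. indicator {y<..} t * fn t)
        = (LINT t|lborel. indicator {y<..} t * fp t - indicator {y<..} t * fn t)"
      by (rule Bochner_Integration.integral_diff[OF i1 i2, symmetric])
    also have "\<dots> = (LINT t|lborel. indicator {y<..} t * f t)"
      by (intro Bochner_Integration.integral_cong refl) (simp add: fpn right_diff_distrib)
    finally show ?thesis using intY[of y] by simp
  qed
  have fpm: "(\<lambda>t. ennreal (fp t)) \<in> borel_measurable lborel" unfolding fp_def by measurable
  have fnm: "(\<lambda>t. ennreal (fn t)) \<in> borel_measurable lborel" unfolding fn_def by measurable
  have dens: "density lborel (\<lambda>t. ennreal (fp t)) = density lborel (\<lambda>t. ennreal (fn t))"
  proof (rule measure_eqI_lessThan)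
    show "sets (density lborel (\<lambda>t. ennreal (fp t))) = sets borel" by simp
    show "sets (density lborel (\<lambda>t. ennreal (fn t))) = sets borel" by simp
    fix y :: real
    have e1: "emeasure (density lborel (\<lambda>t. ennreal (fp t))) {y<..} = ennreal (LINT t|lborel. indicator {y<..} t * fp t)"
      unfolding nnp[symmetric] by (rule emeasure_density[OF fpm]) simp
    have e2: "emeasure (density lborel (\<lambda>t. ennreal (fn t))) {y<..} = ennreal (LINT t|lborel. indicator {y<..} t * fn t)"
      unfolding nnn[symmetric] by (rule emeasure_density[OF fnm]) simp
    show "emeasure (density lborel (\<lambda>t. ennreal (fp t))) {y<..} < \<infinity>"
      unfolding e1 by simp
    show "emeasure (density lborel (\<lambda>t. ennreal (fp t))) {y<..} = emeasure (density lborel (\<lambda>t. ennreal (fn t))) {y<..}"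
      unfolding e1 e2 eqpn ..
  qed
  have "AE t in lborel. ennreal (fp t) = ennreal (fn t)"
    by (rule sigma_finite_measure.density_unique[OF lborel.sigma_finite_measure_axioms fpm fnm dens])
  then show ?thesis
  proof (rule eventually_mono)
    fix t assume "ennreal (fp t) = ennreal (fn t)"
    then have "fp t = fn t" using fp_nn[of t] fn_nn[of t] by simp
    then have "f t = 0" using fpn by simp
    then show "t \<in> {a..b} \<longrightarrow> d t = 0" by (auto simp: f_def indicator_def)
  qed
qed


lemma wd_unique:
  assumes w1: "weak_deriv a b u g1" and w2: "weak_deriv a b u g2"
  shows "AE t in lborel. t \<in> {a..b} \<longrightarrow> g1 t = g2 t"
proof -
  have g1: "g1 \<in> borel_measurable lborel" "set_integrable lborel {a..b} g1" using w1 unfolding weak_deriv_def by blast+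
  have g2: "g2 \<in> borel_measurable lborel" "set_integrable lborel {a..b} g2" using w2 unfolding weak_deriv_def by blast+
  have m: "(\<lambda>t. g1 t - g2 t) \<in> borel_measurable lborel" using g1 g2 by measurable
  have i: "set_integrable lborel {a..b} (\<lambda>t. g1 t - g2 t)" using g1 g2 by simp
  have "set_lebesgue_integral lborel {a..s} (\<lambda>t. g1 t - g2 t) = 0" if s: "s \<in> {a..b}" for s
  proof -
    have s1: "set_integrable lborel {a..s} g1" "set_integrable lborel {a..s} g2"
      using g1 g2 s by (auto intro: set_integrable_subset)
    have e1: "u s = u a + set_lebesgue_integral lborel {a..s} g1" using w1 s unfolding weak_deriv_def by blast
    have e2: "u s = u a + set_lebesgue_integral lborel {a..s} g2" using w2 s unfolding weak_deriv_def by blast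
    have "set_lebesgue_integral lborel {a..s} g1 = set_lebesgue_integral lborel {a..s} g2"
      using e1 e2 by linarith
    then show ?thesis using s1 by simp
  qed
  from wd_zero[OF m i this] show ?thesis by simp
qed

context msh begin

lemma int_split_k:
  fixes f :: "real \<Rightarrow> real"
  assumes f: "f integrable_on {a..b}" and k: "k \<le> M"
  shows "integral {x 0..x k} f = (\<Sum>i\<in>{1..k}. integral {x (i - 1)..x i} f)"
  using k
proof (induction k)
  case 0 then show ?case by simp
next
  case (Suc k)
  have sub: "{x 0..x (Suc k)} \<subseteq> {a..b}" using x_in[of 0] x_in[of "Suc k"] Suc.prems by auto
  have fi: "f integrable_on {x 0..x (Suc k)}" using integrable_on_subinterval[OF f sub] .
  have "integral {x 0..x k} f + integral {x k..x (Suc k)} f = integral {x 0..x (Suc k)} f"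
    by (rule Henstock_Kurzweil_Integration.integral_combine[OF _ _ fi]) (use xmono Suc.prems in auto)
  then show ?case using Suc by simp
qed

lemma int_split:
  fixes f :: "real \<Rightarrow> real"
  assumes f: "f integrable_on {a..b}"
  shows "integral {a..b} f = (\<Sum>i\<in>{1..M}. integral {x (i - 1)..x i} f)"
  using int_split_k[OF f order_refl] x0 xM by simp

lemma Q_cont: "continuous_on {a..b} (Q d)"
  using Q_S20 unfolding S20_def by blast

lemma cont_set_integrable:
  assumes "continuous_on {p..q} (f :: real \<Rightarrow> real)"
  shows "set_integrable lborel {p..q} f"
  unfolding set_integrable_def using borel_integrable_compact[OF compact_Icc assms] by simp

lemma beta_formula:
  "beta_node a b M x z = (\<Sum>i\<in>{1..M}. (x i - x (i - 1)) * (delta z (x (i - 1)) + 4 * delta z (mid i) + delta z (x i)) / 6)"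
proof -
  have si: "set_integrable lborel {a..b} (Q (delta z))" by (rule cont_set_integrable[OF Q_cont])
  have "beta_node a b M x z = integral {a..b} (Q (delta z))"
    unfolding beta_node_def nodal_basis_eq using set_borel_integral_eq_integral(2)[OF si] .
  also have "\<dots> = (\<Sum>i\<in>{1..M}. integral {x (i - 1)..x i} (Q (delta z)))"
    by (rule int_split) (rule set_borel_integral_eq_integral(1)[OF si])
  also have "\<dots> = (\<Sum>i\<in>{1..M}. (x i - x (i - 1)) * (delta z (x (i - 1)) + 4 * delta z (mid i) + delta z (x i)) / 6)"
  proof (rule sum.cong[OF refl])
    fix i assume i: "i \<in> {1..M}"
    have "integral {x (i - 1)..x i} (Q (delta z)) = integral {x (i - 1)..x i} (LI i (delta z))"
      by (rule integral_cong) (rule Q_elem[OF i])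
    also have "\<dots> = (x i - x (i - 1)) * (delta z (x (i - 1)) + 4 * delta z (mid i) + delta z (x i)) / 6"
      unfolding LI_def[abs_def] by (rule integral_unique) (rule lag_simpson[OF step[OF i]])
    finally show "integral {x (i - 1)..x i} (Q (delta z)) = (x i - x (i - 1)) * (delta z (x (i - 1)) + 4 * delta z (mid i) + delta z (x i)) / 6" .
  qed
  finally show ?thesis .
qed

definition enode :: "nat \<Rightarrow> real \<Rightarrow> bool" where
  "enode i z \<longleftrightarrow> z = x (i - 1) \<or> z = mid i \<or> z = x i"

lemma beta_lower:
  assumes i: "i \<in> {1..M}" and z: "enode i z"
  shows "h / (6 * C) \<le> beta_node a b M x z"
proof -
  have nn: "0 \<le> (x j - x (j - 1)) * (delta z (x (j - 1)) + 4 * delta z (mid j) + delta z (x j)) / 6" if "j \<in> {1..M}" for j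
    using hh_pos[OF that] by (intro divide_nonneg_pos mult_nonneg_nonneg) (auto simp: delta_def)
  have d1: "1 \<le> delta z (x (i - 1)) + 4 * delta z (mid i) + delta z (x i)"
    using z unfolding enode_def delta_def by auto
  have "(x i - x (i - 1)) / 6 \<le> (x i - x (i - 1)) * (delta z (x (i - 1)) + 4 * delta z (mid i) + delta z (x i)) / 6"
    using hh_pos[OF i] d1 by (intro divide_right_mono) (auto intro: mult_left_le)
  also have "\<dots> \<le> beta_node a b M x z"
    unfolding beta_formula by (rule member_le_sum[OF i nn]) auto
  finally have b1: "(x i - x (i - 1)) / 6 \<le> beta_node a b M x z" .
  have "h / (6 * C) \<le> (x i - x (i - 1)) / 6"
    using h_le_C[OF i] C_pos by (simp add: field_simps)
  then show ?thesis using b1 by linarith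
qed

lemma beta_pos:
  assumes i: "i \<in> {1..M}" and z: "enode i z"
  shows "0 < beta_node a b M x z"
  using beta_lower[OF assms] h_pos C_pos by (smt (verit) divide_pos_pos)

lemma Qdelta_bound: "\<bar>Q (delta z) t\<bar> \<le> 3"
proof (cases "t \<in> {a..b}")
  case True
  define i where "i = elt t"
  have i: "i \<in> {1..M}" "t \<in> {x (i - 1)..x i}" using elt_prop[OF True] by (auto simp: i_def)
  have "\<bar>Q (delta z) t\<bar> = \<bar>LI i (delta z) t\<bar>" using Q_elem[OF i] by simp
  also have "\<dots> \<le> \<bar>delta z (x (i - 1))\<bar> + \<bar>delta z (mid i)\<bar> + \<bar>delta z (x i)\<bar>"
    unfolding LI_def by (rule lag_bound[OF step[OF i(1)] i(2)])
  also have "\<dots> \<le> 3" by (simp add: delta_def)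
  finally show ?thesis .
next
  case False then show ?thesis unfolding Q_def if_not_P[OF False] by simp
qed

lemma enode_in: "i \<in> {1..M} \<Longrightarrow> enode i z \<Longrightarrow> z \<in> {x (i - 1)..x i}"
  using step[of i] unfolding enode_def mid_def by auto

lemma enode_node: "i \<in> {1..M} \<Longrightarrow> enode i z \<Longrightarrow> z \<in> nodes2 M x"
  unfolding enode_def using x_node[of i] x_node[of "i - 1"] mid_node[of i] by auto

lemma node_enode: "z \<in> nodes2 M x \<Longrightarrow> \<exists>i\<in>{1..M}. enode i z"
proof -
  assume "z \<in> nodes2 M x"
  then consider j where "j \<le> M" "z = x j" | i where "i \<in> {1..M}" "z = mid i"
    unfolding nodes2_def mid_def by auto
  then show ?thesis
  proof cases
    case 1
    show ?thesis
    proof (cases "j = 0")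
      case True then show ?thesis using 1 M1 by (intro bexI[of _ 1]) (auto simp: enode_def)
    next
      case False then show ?thesis using 1 by (intro bexI[of _ j]) (auto simp: enode_def)
    qed
  next
    case 2 then show ?thesis by (auto simp: enode_def)
  qed
qed

lemma enode_close:
  assumes i: "i \<in> {1..M}" and j: "j \<in> {1..M}" and zi: "enode i z" and zj: "enode j z"
  shows "j \<le> i + 1" "i \<le> j + 1"
proof -
  have a1: "z \<in> {x (i - 1)..x i}" "z \<in> {x (j - 1)..x j}" using enode_in i j zi zj by auto
  show "j \<le> i + 1"
  proof (rule ccontr)
    assume "\<not> j \<le> i + 1"
    then have "x i < x (j - 1)" using j by (intro xstrict) auto
    then show False using a1 by auto
  qed
  show "i \<le> j + 1"
  proof (rule ccontr)
    assume "\<not> i \<le> j + 1"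
    then have "x j < x (i - 1)" using i by (intro xstrict) auto
    then show False using a1 by auto
  qed
qed

definition W :: "nat \<Rightarrow> real set" where "W i = {x (i - 2)..x (min M (i + 1))}"

lemma I_sub_W: "i \<in> {1..M} \<Longrightarrow> {x (i - 1)..x i} \<subseteq> W i"
  unfolding W_def using xmono[of "i - 2" "i - 1"] xmono[of i "min M (i + 1)"] by auto

lemma W_sub: "i \<in> {1..M} \<Longrightarrow> W i \<subseteq> {a..b}"
  unfolding W_def using x_in[of "i - 2"] x_in[of "min M (i + 1)"] by auto

lemma support:
  assumes i: "i \<in> {1..M}" and z: "enode i z" and t: "t \<in> {a..b}" and nz: "Q (delta z) t \<noteq> 0"
  shows "t \<in> W i"
proof -
  define j where "j = elt t"
  have j: "j \<in> {1..M}" "t \<in> {x (j - 1)..x j}" using elt_prop[OF t] by (auto simp: j_def)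
  have "LI j (delta z) t \<noteq> 0" using nz Q_elem[OF j] by simp
  moreover have "LI j (delta z) t = 0" if "\<not> enode j z"
  proof -
    have "delta z (x (j - 1)) = 0" "delta z (mid j) = 0" "delta z (x j) = 0"
      using that by (auto simp: enode_def delta_def)
    then show ?thesis unfolding LI_def by (simp add: lag_def)
  qed
  ultimately have zj: "enode j z" by blast
  have c: "j \<le> i + 1" "i \<le> j + 1" using enode_close[OF i j(1) z zj] by auto
  have "x (i - 2) \<le> x (j - 1)" using c j by (intro xmono) auto
  moreover have "x j \<le> x (min M (i + 1))" using c j by (intro xmono) auto
  ultimately show ?thesis using j unfolding W_def by auto
qed

lemma xdiff: "k \<le> j \<Longrightarrow> j \<le> M \<Longrightarrow> x j - x k \<le> real (j - k) * h"
proof (induction j)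
  case 0 then show ?case by simp
next
  case (Suc j)
  show ?case
  proof (cases "k = Suc j")
    case True then show ?thesis by simp
  next
    case False
    then have "k \<le> j" using Suc.prems by simp
    then have ih: "x j - x k \<le> real (j - k) * h" using Suc by simp
    have "x (Suc j) - x j \<le> h" using hh_le[of "Suc j"] Suc.prems by simp
    moreover have "real (Suc j - k) = real (j - k) + 1" using \<open>k \<le> j\<close> by simp
    ultimately show ?thesis using ih by (simp add: algebra_simps)
  qed
qed

lemma W_len: "i \<in> {1..M} \<Longrightarrow> x (min M (i + 1)) - x (i - 2) \<le> 3 * h"
proof -
  assume i: "i \<in> {1..M}"
  have "x (min M (i + 1)) - x (i - 2) \<le> real (min M (i + 1) - (i - 2)) * h"
    using i by (intro xdiff) auto
  also have "\<dots> \<le> 3 * h" using h_pos by (intro mult_right_mono) auto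
  finally show ?thesis .
qed

end

locale vctx = msh +
  fixes v g :: "real \<Rightarrow> real"
  assumes wd: "weak_deriv a b v g" and va: "v a = 0" and vb: "v b = 0"
begin

definition G :: "real \<Rightarrow> real" where "G t = (g t)^2"
definition T :: real where "T = integral {a..b} G"

lemma gm: "g \<in> borel_measurable lborel" and gi: "set_integrable lborel {a..b} g"
  and Gi: "set_integrable lborel {a..b} G"
  using wd unfolding weak_deriv_def G_def by blast+

lemma vrep: "s \<in> {a..b} \<Longrightarrow> v s = v a + set_lebesgue_integral lborel {a..s} g"
  using wd unfolding weak_deriv_def by blast

lemma G_nn: "0 \<le> G t" by (simp add: G_def)

lemma g_int: "g integrable_on {p..q}" if "{p..q} \<subseteq> {a..b}"
  by (rule integrable_on_subinterval[OF set_borel_integral_eq_integral(1)[OF gi] that])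

lemma G_int: "G integrable_on {p..q}" if "{p..q} \<subseteq> {a..b}"
  by (rule integrable_on_subinterval[OF set_borel_integral_eq_integral(1)[OF Gi] that])

lemma G_intab: "G integrable_on {a..b}" using G_int by simp

lemma LINT_g: "s \<in> {a..b} \<Longrightarrow> set_lebesgue_integral lborel {a..s} g = integral {a..s} g"
  by (rule set_borel_integral_eq_integral(2)) (rule set_integrable_subset[OF gi]; auto)

lemma vdiff: assumes "p \<le> q" "p \<in> {a..b}" "q \<in> {a..b}"
  shows "v q - v p = integral {p..q} g"
proof -
  have "integral {a..p} g + integral {p..q} g = integral {a..q} g"
    by (rule Henstock_Kurzweil_Integration.integral_combine) (use assms g_int in auto)
  then show ?thesis using vrep[OF assms(2)] vrep[OF assms(3)] LINT_g assms by auto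
qed

lemma vbound1: assumes "p \<le> q" "{p..q} \<subseteq> {c..d}" "{c..d} \<subseteq> {a..b}"
  shows "(v q - v p)^2 \<le> (q - p) * integral {c..d} G"
proof -
  have pq: "p \<in> {a..b}" "q \<in> {a..b}" using assms by auto
  have "(v q - v p)^2 = (integral {p..q} g)^2" using vdiff[OF assms(1) pq] by simp
  also have "\<dots> \<le> (q - p) * integral {p..q} (\<lambda>t. (g t)^2)"
    by (rule cs_integral) (use assms g_int G_int in \<open>auto simp: G_def[abs_def]\<close>)
  also have "\<dots> \<le> (q - p) * integral {c..d} G"
    unfolding G_def[symmetric]
    by (rule mult_left_mono, rule integral_subset_le) (use assms G_int G_nn in auto)
  finally show ?thesis .
qed

lemma vbound: assumes "p \<in> {c..d}" "q \<in> {c..d}" "{c..d} \<subseteq> {a..b}"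
  shows "(v q - v p)^2 \<le> \<bar>q - p\<bar> * integral {c..d} G"
proof (cases "p \<le> q")
  case True then show ?thesis using vbound1[OF True _ assms(3)] assms by auto
next
  case False
  then have "(v p - v q)^2 \<le> (p - q) * integral {c..d} G" using vbound1[of q p c d] assms by auto
  then show ?thesis using False by (simp add: power2_commute)
qed

lemma T_nn: "0 \<le> T" unfolding T_def using G_intab G_nn by (intro integral_nonneg) auto

lemma int_le_T: "{c..d} \<subseteq> {a..b} \<Longrightarrow> integral {c..d} G \<le> T"
  unfolding T_def by (rule integral_subset_le) (use G_int G_nn in auto)

lemma int_nn: "{c..d} \<subseteq> {a..b} \<Longrightarrow> 0 \<le> integral {c..d} G"
  by (rule integral_nonneg) (use G_int G_nn in auto)

lemma v_cont: "continuous_on {a..b} v"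
  unfolding continuous_on_iff
proof (intro ballI allI impI)
  fix t e :: real assume t: "t \<in> {a..b}" and e: "0 < e"
  define d where "d = e^2 / (T + 1)"
  have d: "0 < d" using e T_nn by (simp add: d_def)
  have "\<forall>s\<in>{a..b}. dist s t < d \<longrightarrow> dist (v s) (v t) < e"
  proof (intro ballI impI)
    fix s assume s: "s \<in> {a..b}" and st: "dist s t < d"
    have "(v s - v t)^2 \<le> \<bar>s - t\<bar> * T"
      using vbound[of t a b s] s t unfolding T_def by simp
    also have "\<dots> \<le> d * T" using st T_nn by (intro mult_right_mono) (auto simp: dist_real_def)
    also have "\<dots> < e^2"
    proof -
      have dt: "d * T = e^2 * (T / (T + 1))" by (simp add: d_def)
      have "T / (T + 1) < 1" using T_nn by simp
      moreover have "0 < e^2" using e by simp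
      ultimately have "e^2 * (T / (T + 1)) < e^2 * 1" by (rule mult_strict_left_mono)
      then show ?thesis using dt by simp
    qed
    finally have "(v s - v t)^2 < e^2" .
    then have "\<bar>v s - v t\<bar>^2 < e^2" by simp
    then have "\<bar>v s - v t\<bar> < e" by (rule power2_less_imp_less) (use e in simp)
    then show "dist (v s) (v t) < e" by (simp add: dist_real_def)
  qed
  then show "\<exists>d>0. \<forall>x'\<in>{a..b}. dist x' t < d \<longrightarrow> dist (v x') (v t) < e" using d by blast
qed

lemma v_abs: "p \<in> {a..b} \<Longrightarrow> \<bar>v p\<bar> \<le> sqrt ((b - a) * T)"
proof -
  assume p: "p \<in> {a..b}"
  have "(v p - v a)^2 \<le> \<bar>p - a\<bar> * T" using vbound[of a a b p] p ab unfolding T_def by simp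
  also have "\<dots> \<le> (b - a) * T" using p T_nn by (intro mult_right_mono) auto
  finally have "(v p)^2 \<le> (b - a) * T" using va by simp
  then have "sqrt ((v p)^2) \<le> sqrt ((b - a) * T)" by (rule real_sqrt_le_mono)
  then show ?thesis by simp
qed

definition EE :: "nat \<Rightarrow> real" where "EE i = integral (W i) G"

lemma beta_int: "beta_node a b M x z = integral {a..b} (Q (delta z))"
proof -
  have si: "set_integrable lborel {a..b} (Q (delta z))" by (rule cont_set_integrable[OF Q_cont])
  show ?thesis unfolding beta_node_def nodal_basis_eq using set_borel_integral_eq_integral(2)[OF si] .
qed

lemma coef_est:
  assumes i: "i \<in> {1..M}" and z: "enode i z"
  shows "\<bar>cz v z - v z\<bar> \<le> 54 * C * sqrt (3 * h * EE i)"
proof -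
  define phi where "phi = Q (delta z)"
  define S where "S = sqrt (3 * h * EE i)"
  define be where "be = beta_node a b M x z"
  have Wab: "W i \<subseteq> {a..b}" using W_sub[OF i] .
  define c where "c = x (i - 2)"
  define d where "d = x (min M (i + 1))"
  have cd: "W i = {c..d}" by (simp add: W_def c_def d_def)
  have cd_ab: "{c..d} \<subseteq> {a..b}" using Wab cd by simp
  have EE_nn: "0 \<le> EE i" unfolding EE_def cd by (rule int_nn[OF cd_ab])
  have zW: "z \<in> W i" using enode_in[OF i z] I_sub_W[OF i] by auto
  have len: "d - c \<le> 3 * h" using W_len[OF i] by (simp add: c_def d_def)
  have be_pos: "0 < be" using beta_pos[OF i z] by (simp add: be_def)
  have be_low: "h / (6 * C) \<le> be" using beta_lower[OF i z] by (simp add: be_def)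
  have cont_phi: "continuous_on {a..b} phi" unfolding phi_def by (rule Q_cont)
  have int1: "(\<lambda>y. v y * phi y) integrable_on {a..b}"
    by (rule integrable_continuous_interval) (intro continuous_intros v_cont cont_phi)
  have int2: "(\<lambda>y. (v y - v z) * phi y) integrable_on {a..b}"
    by (rule integrable_continuous_interval) (intro continuous_intros v_cont cont_phi)
  have int3: "phi integrable_on {a..b}" by (rule integrable_continuous_interval[OF cont_phi])
  have cz_eq: "cz v z = integral {a..b} (\<lambda>y. v y * phi y) / be"
  proof -
    have si: "set_integrable lborel {a..b} (\<lambda>y. v y * phi y)"
      by (rule cont_set_integrable) (intro continuous_intros v_cont cont_phi)
    show ?thesis unfolding cz_def be_def phi_def nodal_basis_eq
      using set_borel_integral_eq_integral(2)[OF si[unfolded phi_def]] by simp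
  qed
  have "integral {a..b} (\<lambda>y. v y * phi y) = integral {a..b} (\<lambda>y. (v y - v z) * phi y + v z * phi y)"
    by (simp add: algebra_simps)
  also have "\<dots> = integral {a..b} (\<lambda>y. (v y - v z) * phi y) + v z * be"
    using int2 int3 by (simp add: integral_add integrable_on_mult_right be_def beta_int phi_def)
  finally have "cz v z - v z = integral {a..b} (\<lambda>y. (v y - v z) * phi y) / be"
    using be_pos cz_eq by (simp add: field_simps)
  then have e1: "\<bar>cz v z - v z\<bar> = \<bar>integral {a..b} (\<lambda>y. (v y - v z) * phi y)\<bar> / be"
    using be_pos by simp
  have pw: "\<bar>(v y - v z) * phi y\<bar> \<le> (if y \<in> W i then 3 * S else 0)" if y: "y \<in> {a..b}" for y
  proof (cases "y \<in> W i")
    case True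
    have "(v y - v z)^2 \<le> \<bar>y - z\<bar> * integral {c..d} G"
      using vbound[of z c d y] True zW cd cd_ab by auto
    also have "\<dots> \<le> (3 * h) * EE i"
    proof (rule mult_mono)
      show "\<bar>y - z\<bar> \<le> 3 * h" using True zW cd len by auto
      show "integral {c..d} G \<le> EE i" by (simp add: EE_def cd)
      show "0 \<le> 3 * h" using h_pos by simp
      show "0 \<le> integral {c..d} G" using int_nn[OF cd_ab] .
    qed
    finally have "\<bar>v y - v z\<bar> \<le> S" unfolding S_def by (simp add: real_le_rsqrt)
    moreover have "\<bar>phi y\<bar> \<le> 3" unfolding phi_def by (rule Qdelta_bound)
    ultimately have "\<bar>(v y - v z) * phi y\<bar> \<le> S * 3"
      unfolding abs_mult using EE_nn h_pos by (intro mult_mono) (auto simp: S_def)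
    then show ?thesis using True by simp
  next
    case False
    then have "phi y = 0" using support[OF i z y] unfolding phi_def by blast
    then show ?thesis using False by simp
  qed
  have intb: "(\<lambda>y. if y \<in> W i then 3 * S else 0) integrable_on {a..b}"
    unfolding integrable_restrict_Int cd Int_absorb2[OF cd_ab] by (rule integrable_const_ivl)
  have cled: "c \<le> d" using zW cd by auto
  have "norm (integral {a..b} (\<lambda>y. (v y - v z) * phi y)) \<le> integral {a..b} (\<lambda>y. if y \<in> W i then 3 * S else 0)"
    by (rule integral_norm_bound_integral[OF int2 intb]) (use pw in \<open>simp only: real_norm_def\<close>)
  then have "\<bar>integral {a..b} (\<lambda>y. (v y - v z) * phi y)\<bar> \<le> integral {a..b} (\<lambda>y. if y \<in> W i then 3 * S else 0)"
    by (simp only: real_norm_def)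
  also have "\<dots> = integral {c..d} (\<lambda>y. 3 * S)"
    unfolding integral_restrict_Int cd Int_absorb2[OF cd_ab] ..
  also have "\<dots> = 3 * S * (d - c)"
    using cled by simp
  also have "\<dots> \<le> 3 * S * (3 * h)"
    using len EE_nn h_pos by (intro mult_left_mono) (auto simp: S_def)
  finally have num: "\<bar>integral {a..b} (\<lambda>y. (v y - v z) * phi y)\<bar> \<le> 9 * S * h" by simp
  have S_nn: "0 \<le> S" unfolding S_def using EE_nn h_pos by simp
  have "\<bar>cz v z - v z\<bar> \<le> 9 * S * h / be"
    unfolding e1 by (rule divide_right_mono[OF num]) (use be_pos in simp)
  also have "\<dots> \<le> 9 * S * h / (h / (6 * C))"
  proof (rule divide_left_mono[OF be_low])
    show "0 \<le> 9 * S * h" using S_nn h_pos by simp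
    show "0 < be * (h / (6 * C))" using be_pos h_pos C_pos by simp
  qed
  also have "\<dots> = 54 * C * S" using h_pos C_pos by (simp add: field_simps)
  finally show ?thesis by (simp add: S_def)
qed

end

lemma lagd_cont: "l < r \<Longrightarrow> continuous_on S (lagd l r y0 ym y1)"
  unfolding lagd_def[abs_def] Let_def by (intro continuous_intros) auto

context msh begin

definition oI :: "nat \<Rightarrow> real set" where "oI i = {x (i - 1)<..<x i}"

definition LD :: "nat \<Rightarrow> (real \<Rightarrow> real) \<Rightarrow> real \<Rightarrow> real" where
  "LD i d t = lagd (x (i - 1)) (x i) (d (x (i - 1))) (d (mid i)) (d (x i)) t"

definition g0 :: "(real \<Rightarrow> real) \<Rightarrow> real \<Rightarrow> real" where
  "g0 d t = (\<Sum>i\<in>{1..M}. indicator (oI i) t * LD i d t)"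

lemma oI_disj: "i \<in> {1..M} \<Longrightarrow> j \<in> {1..M} \<Longrightarrow> t \<in> oI i \<Longrightarrow> t \<in> oI j \<Longrightarrow> i = j"
proof (rule ccontr)
  assume i: "i \<in> {1..M}" and j: "j \<in> {1..M}" and ti: "t \<in> oI i" and tj: "t \<in> oI j" and ne: "i \<noteq> j"
  show False
  proof (cases "i < j")
    case True
    then have "x i \<le> x (j - 1)" using j by (intro xmono) auto
    then show False using ti tj by (auto simp: oI_def)
  next
    case False
    then have "x j \<le> x (i - 1)" using i ne by (intro xmono) auto
    then show False using ti tj by (auto simp: oI_def)
  qed
qed

lemma sum_oI:
  assumes i: "i \<in> {1..M}" and t: "t \<in> oI i"
  shows "(\<Sum>j\<in>{1..M}. indicator (oI j) t * F j t) = (F i t :: real)"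
proof -
  have "(\<Sum>j\<in>{1..M}. indicator (oI j) t * F j t) = indicator (oI i) t * F i t + (\<Sum>j\<in>{1..M} - {i}. indicator (oI j) t * F j t)"
    by (rule sum.remove) (use i in auto)
  moreover have "(\<Sum>j\<in>{1..M} - {i}. indicator (oI j) t * F j t) = 0"
    by (rule sum.neutral) (use oI_disj[OF i _ t] in \<open>auto simp: indicator_def\<close>)
  ultimately show ?thesis using t by simp
qed

lemma sum_oI0:
  assumes "\<And>i. i \<in> {1..M} \<Longrightarrow> t \<notin> oI i"
  shows "(\<Sum>j\<in>{1..M}. indicator (oI j) t * F j t) = (0 :: real)"
  using assms by (intro sum.neutral) auto

lemma xk_notin: "k \<le> M \<Longrightarrow> j \<in> {1..M} \<Longrightarrow> x k \<notin> oI j"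
proof
  assume k: "k \<le> M" and j: "j \<in> {1..M}" and kj: "x k \<in> oI j"
  show False
  proof (cases "k \<le> j - 1")
    case True then have "x k \<le> x (j - 1)" using j by (intro xmono) auto
    then show False using kj by (auto simp: oI_def)
  next
    case False then have "x j \<le> x k" using k by (intro xmono) auto
    then show False using kj by (auto simp: oI_def)
  qed
qed

lemma oI_sub: "oI i \<subseteq> {x (i - 1)..x i}" by (auto simp: oI_def)

lemma in_oI:
  assumes t: "t \<in> {a..b}" and nt: "t \<notin> x ` {0..M}"
  obtains i where "i \<in> {1..M}" "t \<in> oI i"
proof -
  have "elt t \<in> {1..M}" "t \<in> {x (elt t - 1)..x (elt t)}" using elt_prop[OF t] by auto
  moreover have "t \<noteq> x (elt t - 1)" "t \<noteq> x (elt t)" using nt \<open>elt t \<in> {1..M}\<close> by auto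
  ultimately show ?thesis using that[of "elt t"] by (auto simp: oI_def)
qed

lemma g0_eq: "i \<in> {1..M} \<Longrightarrow> t \<in> oI i \<Longrightarrow> g0 d t = LD i d t"
  unfolding g0_def by (rule sum_oI)

lemma g0_sq: "(g0 d t)^2 = (\<Sum>j\<in>{1..M}. indicator (oI j) t * (LD j d t)^2)"
proof (cases "\<exists>i\<in>{1..M}. t \<in> oI i")
  case True
  then obtain i where i: "i \<in> {1..M}" "t \<in> oI i" by blast
  show ?thesis using g0_eq[OF i] sum_oI[OF i, of "\<lambda>j t. (LD j d t)^2"] by simp
next
  case False
  then show ?thesis unfolding g0_def using sum_oI0[of t] by auto
qed

lemma LD_cont: "i \<in> {1..M} \<Longrightarrow> continuous_on S (LD i d)"
  unfolding LD_def[abs_def] by (rule lagd_cont) (rule step)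

lemma term_integrable: "integrable lborel (\<lambda>t. indicator (oI j) t * F t)" if "continuous_on UNIV (F :: real \<Rightarrow> real)"
proof -
  have "set_integrable lborel {x (j - 1)..x j} F"
    by (rule cont_set_integrable) (rule continuous_on_subset[OF that], simp)
  then have "set_integrable lborel (oI j) F" by (rule set_integrable_subset) (auto simp: oI_def)
  then show ?thesis unfolding set_integrable_def by simp
qed

lemma g0_integrable: "integrable lborel (g0 d)"
  unfolding g0_def[abs_def]
  by (rule Bochner_Integration.integrable_sum, rule term_integrable, rule LD_cont) auto

lemma g0_sq_integrable: "integrable lborel (\<lambda>t. (g0 d t)^2)"
  unfolding g0_sq
  by (rule Bochner_Integration.integrable_sum, rule term_integrable, intro continuous_intros LD_cont) auto

lemma g0_zero_out: "t \<notin> {a..b} \<Longrightarrow> g0 d t = 0"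
  unfolding g0_def by (rule sum_oI0) (use oI_sub I_sub in blast)

lemma g0_set_integrable: "S \<in> sets lborel \<Longrightarrow> set_integrable lborel S (g0 d)"
  unfolding set_integrable_def using g0_integrable
  by (rule integrable_mult_indicator[rotated]) auto

lemma g0_sq_set_integrable: "S \<in> sets lborel \<Longrightarrow> set_integrable lborel S (\<lambda>t. (g0 d t)^2)"
  unfolding set_integrable_def using g0_sq_integrable
  by (rule integrable_mult_indicator[rotated]) auto

lemma g0_measurable: "g0 d \<in> borel_measurable lborel"
  using g0_integrable by auto

lemma Q_deriv:
  assumes i: "i \<in> {1..M}" and t: "t \<in> oI i"
  shows "((Q d) has_real_derivative g0 d t) (at t)"
proof -
  have "((LI i d) has_real_derivative LD i d t) (at t)"
    unfolding LI_def[abs_def] LD_def by (rule lag_deriv)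
  then have "((Q d) has_real_derivative LD i d t) (at t)"
    by (rule has_field_derivative_transform_within_open[where S = "oI i"])
       (use t Q_elem[OF i] oI_sub in \<open>auto simp: oI_def\<close>)
  then show ?thesis using g0_eq[OF i t] by simp
qed

lemma Q_ftc:
  assumes s: "s \<in> {a..b}"
  shows "Q d s = Q d a + integral {a..s} (g0 d)"
proof -
  have "((g0 d) has_integral (Q d s - Q d a)) {a..s}"
  proof (rule fundamental_theorem_of_calculus_interior_strong[where S = "x ` {0..M}"])
    show "finite (x ` {0..M})" by simp
    show "a \<le> s" using s by simp
    show "continuous_on {a..s} (Q d)" by (rule continuous_on_subset[OF Q_cont]) (use s in auto)
    fix t assume t: "t \<in> {a<..<s} - x ` {0..M}"
    then have tab: "t \<in> {a..b}" using s by auto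
    obtain i where i: "i \<in> {1..M}" "t \<in> oI i" using in_oI[OF tab] t by blast
    show "((Q d) has_vector_derivative g0 d t) (at t)"
      using Q_deriv[OF i] by (simp add: has_real_derivative_iff_has_vector_derivative)
  qed
  then show ?thesis by (simp add: integral_unique)
qed

lemma Q_weak_deriv: "weak_deriv a b (Q d) (g0 d)"
  unfolding weak_deriv_def
proof (intro conjI ballI)
  show "g0 d \<in> borel_measurable lborel" by (rule g0_measurable)
  show "set_integrable lborel {a..b} (g0 d)" by (rule g0_set_integrable) simp
  show "set_integrable lborel {a..b} (\<lambda>t. (g0 d t)^2)" by (rule g0_sq_set_integrable) simp
  fix s assume s: "s \<in> {a..b}"
  show "Q d s = Q d a + set_lebesgue_integral lborel {a..s} (g0 d)"
    using Q_ftc[OF s] set_borel_integral_eq_integral(2)[OF g0_set_integrable[of "{a..s}"]] by simp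
qed

end

context vctx begin

definition ee :: "nat \<Rightarrow> real" where
  "ee j = (if j \<in> {1..M} then integral {x (j - 1)..x j} G else 0)"

lemma ee_nn: "0 \<le> ee j"
  unfolding ee_def using int_nn I_sub by auto

lemma EE_split: assumes i: "i \<in> {1..M}" shows "EE i = ee (i - 1) + ee i + ee (i + 1)"
proof -
  have m1: "x (i - 2) \<le> x (i - 1)" by (rule xmono) (use i in auto)
  have m2: "x (i - 1) \<le> x i" using step[OF i] by simp
  have m3: "x i \<le> x (min M (i + 1))" by (rule xmono) (use i in auto)
  have Wab: "{x (i - 2)..x (min M (i + 1))} \<subseteq> {a..b}" using W_sub[OF i] unfolding W_def .
  have GW: "G integrable_on {x (i - 2)..x (min M (i + 1))}" using G_int[OF Wab] .
  have GW2: "G integrable_on {x (i - 1)..x (min M (i + 1))}"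
    by (rule integrable_on_subinterval[OF GW]) (use m1 in auto)
  have "EE i = integral {x (i - 2)..x (i - 1)} G + integral {x (i - 1)..x (min M (i + 1))} G"
    unfolding EE_def W_def
    by (rule Henstock_Kurzweil_Integration.integral_combine[OF m1 _ GW, symmetric]) (use m2 m3 in auto)
  also have "integral {x (i - 1)..x (min M (i + 1))} G = integral {x (i - 1)..x i} G + integral {x i..x (min M (i + 1))} G"
    by (rule Henstock_Kurzweil_Integration.integral_combine[OF m2 m3 GW2, symmetric])
  also have "integral {x (i - 2)..x (i - 1)} G = ee (i - 1)"
  proof (cases "i = 1")
    case True then show ?thesis by (simp add: ee_def)
  next
    case False
    then have "i - 2 = i - 1 - 1" "i - 1 \<in> {1..M}" using i by auto
    then show ?thesis by (simp add: ee_def)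
  qed
  also have "integral {x (i - 1)..x i} G = ee i" using i by (simp add: ee_def)
  also have "integral {x i..x (min M (i + 1))} G = ee (i + 1)"
  proof (cases "i = M")
    case True then show ?thesis by (simp add: ee_def)
  next
    case False
    then have "min M (i + 1) = i + 1" "i + 1 \<in> {1..M}" using i by auto
    then show ?thesis by (simp add: ee_def)
  qed
  finally show ?thesis by simp
qed

lemma ee_total: "(\<Sum>j\<in>{0..M+1}. ee j) = T"
proof -
  have "(\<Sum>j\<in>{0..M+1}. ee j) = (\<Sum>j\<in>{1..M}. ee j)"
    by (rule sum.mono_neutral_right) (auto simp: ee_def)
  also have "\<dots> = (\<Sum>j\<in>{1..M}. integral {x (j - 1)..x j} G)" by (simp add: ee_def)
  also have "\<dots> = T" unfolding T_def by (rule int_split[OF G_intab, symmetric])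
  finally show ?thesis .
qed

lemma shift_sum: assumes inj: "inj_on f {1..M}" and sub: "f ` {1..M} \<subseteq> {0..M+1}"
  shows "(\<Sum>i\<in>{1..M}. ee (f i)) \<le> T"
proof -
  have "(\<Sum>i\<in>{1..M}. ee (f i)) = (\<Sum>j\<in>f ` {1..M}. ee j)"
    by (rule sum.reindex[OF inj, symmetric, unfolded comp_def])
  also have "\<dots> \<le> (\<Sum>j\<in>{0..M+1}. ee j)"
    by (rule sum_mono2[OF _ sub]) (auto simp: ee_nn)
  finally show ?thesis using ee_total by simp
qed

lemma sumEE: "(\<Sum>i\<in>{1..M}. EE i) \<le> 3 * T"
proof -
  have "(\<Sum>i\<in>{1..M}. EE i) = (\<Sum>i\<in>{1..M}. ee (i - 1)) + (\<Sum>i\<in>{1..M}. ee i) + (\<Sum>i\<in>{1..M}. ee (i + 1))"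
    by (simp add: EE_split sum.distrib)
  also have "\<dots> \<le> T + T + T"
  proof (intro add_mono)
    show "(\<Sum>i\<in>{1..M}. ee (i - 1)) \<le> T" by (rule shift_sum) (auto simp: inj_on_def)
    show "(\<Sum>i\<in>{1..M}. ee i) \<le> T" using shift_sum[of "\<lambda>i. i"] by auto
    show "(\<Sum>i\<in>{1..M}. ee (i + 1)) \<le> T" by (rule shift_sum) (auto simp: inj_on_def)
  qed
  finally show ?thesis by simp
qed

lemma EE_nn: "i \<in> {1..M} \<Longrightarrow> 0 \<le> EE i"
  unfolding EE_def W_def using int_nn W_sub unfolding W_def by blast

lemma EE_le_T: "i \<in> {1..M} \<Longrightarrow> EE i \<le> T"
  unfolding EE_def W_def using int_le_T W_sub unfolding W_def by blast

lemma h_le_ba: "h \<le> b - a"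
proof -
  have "h \<in> (\<lambda>i. x i - x (i - 1)) ` {1..M}" unfolding h_def meshsize_def
    by (rule Max_in) (use M1 in auto)
  then obtain i where i: "i \<in> {1..M}" "h = x i - x (i - 1)" by auto
  have "i - 1 \<le> M" using i by auto
  then show ?thesis using x_in[of i] x_in[of "i - 1"] i by auto
qed

lemma node_v_est:
  assumes i: "i \<in> {1..M}" and y: "enode i y"
  shows "\<bar>v y - v (x (i - 1))\<bar> \<le> sqrt (3 * h * EE i)"
proof -
  have yI: "y \<in> {x (i - 1)..x i}" using enode_in[OF i y] .
  have xI: "x (i - 1) \<in> {x (i - 1)..x i}" using step[OF i] by auto
  have Wab: "W i \<subseteq> {a..b}" using W_sub[OF i] .
  have "(v y - v (x (i - 1)))^2 \<le> \<bar>y - x (i - 1)\<bar> * EE i"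
    using vbound[of "x (i - 1)" "x (i - 2)" "x (min M (i + 1))" y] yI xI I_sub_W[OF i] Wab
    unfolding EE_def W_def by auto
  also have "\<dots> \<le> (3 * h) * EE i"
  proof (rule mult_right_mono)
    show "\<bar>y - x (i - 1)\<bar> \<le> 3 * h" using yI hh_le[OF i] h_pos by auto
  qed (rule EE_nn[OF i])
  finally show ?thesis by (simp add: real_le_rsqrt)
qed

lemma alpha_est:
  assumes i: "i \<in> {1..M}" and y: "enode i y"
  shows "\<bar>alpha v y - v y\<bar> \<le> 54 * C * sqrt (3 * h * EE i)"
proof (cases "y \<in> {a, b}")
  case True
  then have "alpha v y = 0" by (simp add: alpha_def)
  moreover have "v y = 0" using True va vb by auto
  ultimately show ?thesis using C_pos h_pos EE_nn[OF i] by simp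
next
  case False
  then have "alpha v y = cz v y" using enode_node[OF i y] by (simp add: alpha_def)
  then show ?thesis using coef_est[OF i y] by simp
qed

lemma alpha_w:
  assumes i: "i \<in> {1..M}" and y: "enode i y"
  shows "\<bar>alpha v y - v (x (i - 1))\<bar> \<le> (54 * C + 1) * sqrt (3 * h * EE i)"
  using alpha_est[OF i y] node_v_est[OF i y] by (simp add: algebra_simps)

end

context vctx begin

definition DD :: "nat \<Rightarrow> real" where "DD i = (54 * C + 1) * sqrt (3 * h * EE i)"

lemma DD_nn: "i \<in> {1..M} \<Longrightarrow> 0 \<le> DD i"
  unfolding DD_def using C_pos h_pos EE_nn by simp

lemma enode_l: "i \<in> {1..M} \<Longrightarrow> enode i (x (i - 1))" and enode_m: "enode i (mid i)" and enode_r: "enode i (x i)"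
  by (auto simp: enode_def)

lemma g0_elem_bound:
  assumes i: "i \<in> {1..M}" and t: "t \<in> {x (i - 1)..x i}"
  shows "\<bar>g0 (alpha v) t\<bar> \<le> 10 * DD i / (x i - x (i - 1))"
proof (cases "t \<in> oI i")
  case True
  define w where "w = v (x (i - 1))"
  have "g0 (alpha v) t = LD i (alpha v) t" by (rule g0_eq[OF i True])
  also have "\<dots> = lagd (x (i - 1)) (x i) (alpha v (x (i - 1)) - w) (alpha v (mid i) - w) (alpha v (x i) - w) t"
    unfolding LD_def by (rule lagd_shift)
  finally have e: "g0 (alpha v) t = lagd (x (i - 1)) (x i) (alpha v (x (i - 1)) - w) (alpha v (mid i) - w) (alpha v (x i) - w) t" .
  have b0: "\<bar>alpha v (x (i - 1)) - w\<bar> \<le> DD i" unfolding w_def DD_def by (rule alpha_w[OF i enode_l[OF i]])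
  have bm: "\<bar>alpha v (mid i) - w\<bar> \<le> DD i" unfolding w_def DD_def by (rule alpha_w[OF i enode_m])
  have b1: "\<bar>alpha v (x i) - w\<bar> \<le> DD i" unfolding w_def DD_def by (rule alpha_w[OF i enode_r])
  have "\<bar>g0 (alpha v) t\<bar> \<le> (3 * \<bar>alpha v (x (i - 1)) - w\<bar> + 4 * \<bar>alpha v (mid i) - w\<bar> + 3 * \<bar>alpha v (x i) - w\<bar>) / (x i - x (i - 1))"
    unfolding e by (rule lagd_bound[OF step[OF i] t])
  also have "\<dots> \<le> 10 * DD i / (x i - x (i - 1))"
    by (rule divide_right_mono) (use b0 bm b1 hh_pos[OF i] in auto)
  finally show ?thesis .
next
  case False
  then have "t = x (i - 1) \<or> t = x i" using t by (auto simp: oI_def)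
  then have "\<And>j. j \<in> {1..M} \<Longrightarrow> t \<notin> oI j" using xk_notin i by auto
  then have "g0 (alpha v) t = 0" unfolding g0_def by (rule sum_oI0)
  then show ?thesis using DD_nn[OF i] hh_pos[OF i] by simp
qed

lemma g0_elem_int:
  assumes i: "i \<in> {1..M}"
  shows "integral {x (i - 1)..x i} (\<lambda>t. (g0 (alpha v) t)^2) \<le> 300 * C * (54 * C + 1)^2 * EE i"
proof -
  define hi where "hi = x i - x (i - 1)"
  have hi: "0 < hi" using hh_pos[OF i] by (simp add: hi_def)
  define K where "K = (10 * DD i / hi)^2"
  have int: "(\<lambda>t. (g0 (alpha v) t)^2) integrable_on {x (i - 1)..x i}"
    by (rule set_borel_integral_eq_integral(1)[OF g0_sq_set_integrable]) simp
  have "integral {x (i - 1)..x i} (\<lambda>t. (g0 (alpha v) t)^2) \<le> integral {x (i - 1)..x i} (\<lambda>t. K)"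
  proof (rule integral_le[OF int])
    fix t assume t: "t \<in> {x (i - 1)..x i}"
    have "\<bar>g0 (alpha v) t\<bar> \<le> 10 * DD i / hi" using g0_elem_bound[OF i t] by (simp add: hi_def)
    then show "(g0 (alpha v) t)^2 \<le> K" unfolding K_def
      by (metis abs_ge_zero order_trans power2_abs power_mono)
  qed (rule integrable_const_ivl)
  also have "\<dots> = K * hi" using hi by (simp add: hi_def)
  also have "\<dots> = 100 * (DD i)^2 / hi"
    unfolding K_def using hi by (simp add: power_divide power_mult_distrib power2_eq_square)
  also have "(DD i)^2 = (54 * C + 1)^2 * (3 * h * EE i)"
  proof -
    have sq: "(sqrt (3 * h * EE i))^2 = 3 * h * EE i" using h_pos EE_nn[OF i] by simp
    show ?thesis unfolding DD_def power_mult_distrib sq ..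
  qed
  also have "100 * ((54 * C + 1)^2 * (3 * h * EE i)) / hi = 300 * (54 * C + 1)^2 * EE i * (h / hi)" using hi by (simp add: field_simps)
  also have "\<dots> \<le> 300 * (54 * C + 1)^2 * EE i * C"
  proof (rule mult_left_mono)
    show "h / hi \<le> C" using h_le_C[OF i] hi by (simp add: hi_def divide_le_eq)
    show "0 \<le> 300 * (54 * C + 1)^2 * EE i" using EE_nn[OF i] by simp
  qed
  finally show ?thesis by (simp add: algebra_simps)
qed

lemma g0_total:
  "integral {a..b} (\<lambda>t. (g0 (alpha v) t)^2) \<le> 900 * C * (54 * C + 1)^2 * T"
proof -
  have int: "(\<lambda>t. (g0 (alpha v) t)^2) integrable_on {a..b}"
    by (rule set_borel_integral_eq_integral(1)[OF g0_sq_set_integrable]) simp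
  have "integral {a..b} (\<lambda>t. (g0 (alpha v) t)^2) = (\<Sum>i\<in>{1..M}. integral {x (i - 1)..x i} (\<lambda>t. (g0 (alpha v) t)^2))"
    by (rule int_split[OF int])
  also have "\<dots> \<le> (\<Sum>i\<in>{1..M}. 300 * C * (54 * C + 1)^2 * EE i)"
    by (rule sum_mono) (rule g0_elem_int)
  also have "\<dots> = 300 * C * (54 * C + 1)^2 * (\<Sum>i\<in>{1..M}. EE i)" by (simp add: sum_distrib_left)
  also have "\<dots> \<le> 300 * C * (54 * C + 1)^2 * (3 * T)"
    by (rule mult_left_mono[OF sumEE]) (use C_pos in simp)
  finally show ?thesis by simp
qed

definition RR :: real where "RR = (54 * C + 1) * sqrt (3 * (b - a) * T)"

lemma alpha_abs:
  assumes i: "i \<in> {1..M}" and y: "enode i y"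
  shows "\<bar>alpha v y\<bar> \<le> RR"
proof -
  have yab: "y \<in> {a..b}" using enode_in[OF i y] I_sub[OF i] by auto
  have s1: "sqrt (3 * h * EE i) \<le> sqrt (3 * (b - a) * T)"
    using h_le_ba EE_le_T[OF i] EE_nn[OF i] h_pos by (intro real_sqrt_le_mono mult_mono) auto
  have s2: "sqrt ((b - a) * T) \<le> sqrt (3 * (b - a) * T)"
    using T_nn ab by (intro real_sqrt_le_mono mult_right_mono) auto
  have "\<bar>alpha v y\<bar> \<le> \<bar>alpha v y - v y\<bar> + \<bar>v y\<bar>" by simp
  also have "\<dots> \<le> 54 * C * sqrt (3 * (b - a) * T) + sqrt (3 * (b - a) * T)"
    using alpha_est[OF i y] v_abs[OF yab] s1 s2 C_pos
    by (smt (verit, best) mult_left_mono)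
  also have "\<dots> = RR" by (simp add: RR_def algebra_simps)
  finally show ?thesis .
qed

lemma Q_abs: "t \<in> {a..b} \<Longrightarrow> \<bar>Q (alpha v) t\<bar> \<le> 3 * RR"
proof -
  assume t: "t \<in> {a..b}"
  define i where "i = elt t"
  have i: "i \<in> {1..M}" "t \<in> {x (i - 1)..x i}" using elt_prop[OF t] by (auto simp: i_def)
  have "\<bar>Q (alpha v) t\<bar> = \<bar>LI i (alpha v) t\<bar>" using Q_elem[OF i] by simp
  also have "\<dots> \<le> \<bar>alpha v (x (i - 1))\<bar> + \<bar>alpha v (mid i)\<bar> + \<bar>alpha v (x i)\<bar>"
    unfolding LI_def by (rule lag_bound[OF step[OF i(1)] i(2)])
  also have "\<dots> \<le> RR + RR + RR"
    using alpha_abs[OF i(1) enode_l[OF i(1)]] alpha_abs[OF i(1) enode_m] alpha_abs[OF i(1) enode_r]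
    by linarith
  finally show ?thesis by simp
qed

lemma Q_L2:
  "integral {a..b} (\<lambda>t. (Q (alpha v) t)^2) \<le> 27 * (54 * C + 1)^2 * (b - a)^2 * T"
proof -
  have int: "(\<lambda>t. (Q (alpha v) t)^2) integrable_on {a..b}"
    by (rule integrable_continuous_interval) (intro continuous_intros Q_cont)
  have "integral {a..b} (\<lambda>t. (Q (alpha v) t)^2) \<le> integral {a..b} (\<lambda>t. (3 * RR)^2)"
  proof (rule integral_le[OF int])
    fix t assume t: "t \<in> {a..b}"
    show "(Q (alpha v) t)^2 \<le> (3 * RR)^2"
      using Q_abs[OF t] by (metis abs_ge_zero order_trans power2_abs power_mono)
  qed (rule integrable_const_ivl)
  also have "\<dots> = 9 * RR^2 * (b - a)" using ab by (simp add: power2_eq_square)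
  also have "RR^2 = (54 * C + 1)^2 * (3 * (b - a) * T)"
    unfolding RR_def using ab T_nn by (simp add: power_mult_distrib)
  finally show ?thesis by (simp add: power2_eq_square algebra_simps)
qed

end

context vctx begin

lemma final_bound:
  assumes gv: "g = (SOME g. weak_deriv a b v g)"
  shows "H1_norm a b (Pi_tilde a b M x v) \<le> sqrt (27 * (54 * C + 1)^2 * (b - a)^2 + 900 * C * (54 * C + 1)^2) * H1_norm a b v"
proof -
  define K where "K = 27 * (54 * C + 1)^2 * (b - a)^2 + 900 * C * (54 * C + 1)^2"
  define u where "u = Q (alpha v)"
  define g' where "g' = (SOME g'. weak_deriv a b u g')"
  have wdu: "weak_deriv a b u (g0 (alpha v))" unfolding u_def by (rule Q_weak_deriv)
  have wdg': "weak_deriv a b u g'" unfolding g'_def by (rule someI[of "weak_deriv a b u" "g0 (alpha v)", OF wdu])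
  have g'm: "g' \<in> borel_measurable lborel" using wdg' unfolding weak_deriv_def by blast
  have ae: "AE t in lborel. t \<in> {a..b} \<longrightarrow> g' t = g0 (alpha v) t" by (rule wd_unique[OF wdg' wdu])
  have L1: "set_lebesgue_integral lborel {a..b} (\<lambda>t. (g' t)^2) = set_lebesgue_integral lborel {a..b} (\<lambda>t. (g0 (alpha v) t)^2)"
    by (rule set_lebesgue_integral_cong_AE) (use g'm g0_measurable ae in \<open>auto elim!: eventually_mono\<close>)
  also have "\<dots> = integral {a..b} (\<lambda>t. (g0 (alpha v) t)^2)"
    by (rule set_borel_integral_eq_integral(2)[OF g0_sq_set_integrable]) simp
  finally have L1': "set_lebesgue_integral lborel {a..b} (\<lambda>t. (g' t)^2) = integral {a..b} (\<lambda>t. (g0 (alpha v) t)^2)" .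
  have L2: "set_lebesgue_integral lborel {a..b} (\<lambda>t. (u t)^2) = integral {a..b} (\<lambda>t. (u t)^2)"
    unfolding u_def by (rule set_borel_integral_eq_integral(2)[OF cont_set_integrable]) (intro continuous_intros Q_cont)
  have Hu: "H1_norm a b u = sqrt (integral {a..b} (\<lambda>t. (u t)^2) + integral {a..b} (\<lambda>t. (g0 (alpha v) t)^2))"
    unfolding H1_norm_def g'_def[symmetric] L2 L1' ..
  have bnd: "integral {a..b} (\<lambda>t. (u t)^2) + integral {a..b} (\<lambda>t. (g0 (alpha v) t)^2) \<le> K * T"
    using Q_L2 g0_total unfolding u_def K_def by (simp add: algebra_simps)
  have LG: "set_lebesgue_integral lborel {a..b} (\<lambda>t. (g t)^2) = T"
    unfolding T_def using set_borel_integral_eq_integral(2)[OF Gi] by (simp add: G_def[abs_def])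
  have vnn: "0 \<le> set_lebesgue_integral lborel {a..b} (\<lambda>t. (v t)^2)"
    unfolding set_lebesgue_integral_def by (rule integral_nonneg_AE) (simp add: indicator_def)
  have Hv: "H1_norm a b v = sqrt (set_lebesgue_integral lborel {a..b} (\<lambda>t. (v t)^2) + T)"
    unfolding H1_norm_def gv[symmetric] LG ..
  have K_nn: "0 \<le> K" unfolding K_def using C_pos by simp
  have "H1_norm a b (Pi_tilde a b M x v) = H1_norm a b u" by (simp add: u_def Pi_eq)
  also have "\<dots> \<le> sqrt (K * T)" unfolding Hu by (rule real_sqrt_le_mono[OF bnd])
  also have "\<dots> \<le> sqrt (K * (set_lebesgue_integral lborel {a..b} (\<lambda>t. (v t)^2) + T))"
    using vnn K_nn by (intro real_sqrt_le_mono mult_left_mono) auto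
  also have "\<dots> = sqrt K * H1_norm a b v" unfolding Hv by (simp add: real_sqrt_mult)
  finally show ?thesis unfolding K_def .
qed

end

lemma mainTheorem7_aux:
  fixes a b C :: real
  assumes "a < b"
  shows "\<exists>c>0. \<forall>M x. is_mesh a b M x \<and> quasi_uniform C M x \<longrightarrow>
           (\<forall>v. H10 a b v \<longrightarrow> H1_norm a b (Pi_tilde a b M x v) \<le> c * H1_norm a b v)"
proof (intro exI[of _ "sqrt (27 * (54 * \<bar>C\<bar> + 1)^2 * (b - a)^2 + 900 * \<bar>C\<bar> * (54 * \<bar>C\<bar> + 1)^2) + 1"] conjI allI impI)
  have "0 \<le> sqrt (27 * (54 * \<bar>C\<bar> + 1)^2 * (b - a)^2 + 900 * \<bar>C\<bar> * (54 * \<bar>C\<bar> + 1)^2)" by simp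
  then show "0 < sqrt (27 * (54 * \<bar>C\<bar> + 1)^2 * (b - a)^2 + 900 * \<bar>C\<bar> * (54 * \<bar>C\<bar> + 1)^2) + 1" by linarith
  fix M x v
  assume mq: "is_mesh a b M x \<and> quasi_uniform C M x" and hv: "H10 a b v"
  define g where "g = (SOME g. weak_deriv a b v g)"
  have ex: "\<exists>g. weak_deriv a b v g" using hv unfolding H10_def H1_def by blast
  have wd: "weak_deriv a b v g" unfolding g_def using someI_ex[OF ex] .
  interpret vctx a b M x C v g
    using assms mq hv wd by unfold_locales (auto simp: H10_def)
  have aC: "\<bar>C\<bar> = C" using C_pos by simp
  have "H1_norm a b (Pi_tilde a b M x v) \<le> sqrt (27 * (54 * \<bar>C\<bar> + 1)^2 * (b - a)^2 + 900 * \<bar>C\<bar> * (54 * \<bar>C\<bar> + 1)^2) * H1_norm a b v"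
    unfolding aC by (rule final_bound) (simp add: g_def)
  also have "\<dots> \<le> (sqrt (27 * (54 * \<bar>C\<bar> + 1)^2 * (b - a)^2 + 900 * \<bar>C\<bar> * (54 * \<bar>C\<bar> + 1)^2) + 1) * H1_norm a b v"
  proof (rule mult_right_mono)
    have n1: "0 \<le> set_lebesgue_integral lborel {a..b} (\<lambda>t. (v t)^2)"
      unfolding set_lebesgue_integral_def by (rule integral_nonneg_AE) (simp add: indicator_def)
    have n2: "0 \<le> set_lebesgue_integral lborel {a..b} (\<lambda>t. ((SOME g. weak_deriv a b v g) t)^2)"
      unfolding set_lebesgue_integral_def by (rule integral_nonneg_AE) (simp add: indicator_def)
    show "0 \<le> H1_norm a b v" unfolding H1_norm_def using n1 n2 by simp
  qed simp
  finally show "H1_norm a b (Pi_tilde a b M x v) \<le> (sqrt (27 * (54 * \<bar>C\<bar> + 1)^2 * (b - a)^2 + 900 * \<bar>C\<bar> * (54 * \<bar>C\<bar> + 1)^2) + 1) * H1_norm a b v" .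
qed

theorem mainTheorem7:
  fixes a b C :: real
  assumes "a < b"
  shows "\<exists>c>0. \<forall>M x. is_mesh a b M x \<and> quasi_uniform C M x \<longrightarrow>
           (\<forall>v. H10 a b v \<longrightarrow> H1_norm a b (Pi_tilde a b M x v) \<le> c * H1_norm a b v)"
  using mainTheorem7_aux[OF assms] .

end
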